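(* Let $C$ be a smooth convex plane curve with no two parallel tangent lines, with associated domain $D$ and area distance $f:D\to\mathbb{R}$, and let $C(r)$ be a regular parameterization of $C$ oriented as in the context. For $p\in D$ let $C(u)$, $C(v)$, with $u=u(p)<v(p)=v$, be the extremities of the minimal chord $l(p)$. Then: (1) $\nabla f(p)=R\big(\tfrac12(C(v)-C(u))\big)$; (2) $D^2f(p)(C'(u),C'(u))=0$, $D^2f(p)(C'(v),C'(v))=0$ and $D^2f(p)(C'(u),C'(v))=[C'(v),C'(u)]$; (3) $\det(D^2f(p))=-1$.
   Context: $C$ may have $2$, $1$ or $0$ endpoints. $D$ is the plane region bounded by $C$ and by the image(s) of $C$ under the homothety of ratio $1/2$ centred at each endpoint of $C$. A chord is a segment joining two points of $C$. For $p\in D$, each chord $l$ through $p$ bounds together with $C$ a region $D_l$; $l(p)$ is the chord through $p$ minimising the area of $D_l$, and $f(p)=\tfrac12\,\mathrm{area}(D_{l(p)})$. It is known that $p$ is the midpoint of $l(p)$. The parameterization is oriented so that the region $D_{l(p)}$ lies to the left of the arc $C([u,v])$, equivalently $f(p)=\tfrac14\int_{u(p)}^{v(p)}[C(s)-p,C'(s)]\,ds$. Notation: $[X,Y]$ is the determinant of the $2\times 2$ matrix with columns $X,Y$; $R$ is the counterclockwise rotation by ninety degrees; $D^2f$ is the Hessian of $f$ viewed as a bilinear form. *)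

theory Defs
  imports "HOL-Analysis.Analysis"
begin

text \<open>Plane = real \<times> real.  [X,Y] = determinant with columns X, Y; R = rotation by +90 degrees.\<close>

definition cross2 :: "real \<times> real \<Rightarrow> real \<times> real \<Rightarrow> real" where
  "cross2 X Y = fst X * snd Y - snd X * fst Y"

definition rot90 :: "real \<times> real \<Rightarrow> real \<times> real" where
  "rot90 X = (- snd X, fst X)"

definition smooth_curve :: "real set \<Rightarrow> (real \<Rightarrow> real \<times> real) \<Rightarrow> (real \<Rightarrow> real \<times> real) \<Rightarrow> bool" where
  "smooth_curve I C C' \<longleftrightarrow>
     (\<exists>Cd :: nat \<Rightarrow> real \<Rightarrow> real \<times> real. Cd 0 = C \<and> Cd 1 = C' \<and>
        (\<forall>k. \<forall>t\<in>I. (Cd k has_vector_derivative Cd (Suc k) t) (at t within I)))"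

definition regular_curve :: "real set \<Rightarrow> (real \<Rightarrow> real \<times> real) \<Rightarrow> bool" where
  "regular_curve I C' \<longleftrightarrow> (\<forall>t\<in>I. C' t \<noteq> 0)"

definition convex_curve :: "real set \<Rightarrow> (real \<Rightarrow> real \<times> real) \<Rightarrow> bool" where
  "convex_curve I C \<longleftrightarrow> inj_on C I \<and> C ` I \<subseteq> frontier (convex hull (C ` I))"

text \<open>Orientation: the curve lies to the left of each of its (oriented) tangent lines,
  so that the region cut off by a chord lies to the left of the arc.\<close>
definition left_oriented :: "real set \<Rightarrow> (real \<Rightarrow> real \<times> real) \<Rightarrow> (real \<Rightarrow> real \<times> real) \<Rightarrow> bool" where
  "left_oriented I C C' \<longleftrightarrow> (\<forall>s\<in>I. \<forall>t\<in>I. cross2 (C' t) (C s - C t) \<ge> 0)"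

definition no_parallel_tangents :: "real set \<Rightarrow> (real \<Rightarrow> real \<times> real) \<Rightarrow> bool" where
  "no_parallel_tangents I C' \<longleftrightarrow> (\<forall>s\<in>I. \<forall>t\<in>I. s \<noteq> t \<longrightarrow> cross2 (C' s) (C' t) \<noteq> 0)"

text \<open>Area of the region D_l cut off by the chord from C u to C v (u < v).\<close>
definition chord_area :: "(real \<Rightarrow> real \<times> real) \<Rightarrow> (real \<Rightarrow> real \<times> real) \<Rightarrow> real \<Rightarrow> real \<Rightarrow> real" where
  "chord_area C C' u v = (1/2) * integral {u..v} (\<lambda>s. cross2 (C s - C u) (C' s))"

definition chord_through :: "real set \<Rightarrow> (real \<Rightarrow> real \<times> real) \<Rightarrow> real \<times> real \<Rightarrow> real \<Rightarrow> real \<Rightarrow> bool" where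
  "chord_through I C p s t \<longleftrightarrow> s \<in> I \<and> t \<in> I \<and> s < t \<and> p \<in> closed_segment (C s) (C t)"

definition area_distance :: "real set \<Rightarrow> (real \<Rightarrow> real \<times> real) \<Rightarrow> (real \<Rightarrow> real \<times> real) \<Rightarrow> real \<times> real \<Rightarrow> real" where
  "area_distance I C C' p = (1/2) * Inf {chord_area C C' s t | s t. chord_through I C p s t}"

definition minimal_chord :: "real set \<Rightarrow> (real \<Rightarrow> real \<times> real) \<Rightarrow> (real \<Rightarrow> real \<times> real) \<Rightarrow> real \<times> real \<Rightarrow> real \<Rightarrow> real \<Rightarrow> bool" where
  "minimal_chord I C C' p u v \<longleftrightarrow> chord_through I C p u v \<and>
     (\<forall>s t. chord_through I C p s t \<longrightarrow> chord_area C C' u v \<le> chord_area C C' s t)"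

text \<open>The domain D: bounded by C and its images under the homotheties of ratio 1/2
  centred at the endpoints; equivalently the set of midpoints of pairs of curve points.\<close>
definition area_domain :: "real set \<Rightarrow> (real \<Rightarrow> real \<times> real) \<Rightarrow> (real \<times> real) set" where
  "area_domain I C = {(1/2) *\<^sub>R (C u + C v) | u v. u \<in> I \<and> v \<in> I \<and> u \<le> v}"

definition hess_det :: "(real \<times> real \<Rightarrow> real \<times> real) \<Rightarrow> real" where
  "hess_det H = (H (1,0) \<bullet> (1,0)) * (H (0,1) \<bullet> (0,1)) - (H (1,0) \<bullet> (0,1)) * (H (0,1) \<bullet> (1,0))"

end

theory Submission
  imports Defs
begin

lemma bb_cross2: "bounded_bilinear cross2"
proof -
  have "bounded_bilinear (\<lambda>x y. rot90 x \<bullet> y)"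
    by (rule bounded_bilinear.comp1[OF bounded_bilinear_inner])
       (auto simp: rot90_def intro!: bounded_linear_Pair bounded_linear_fst bounded_linear_snd bounded_linear_minus)
  moreover have "(\<lambda>x y. rot90 x \<bullet> y) = cross2"
    by (auto simp: fun_eq_iff rot90_def cross2_def inner_prod_def)
  ultimately show ?thesis by simp
qed

lemma cross2_rot: "cross2 X Y = rot90 X \<bullet> Y"
  by (simp add: rot90_def cross2_def inner_prod_def)

locale cv =
  fixes I :: "real set" and C C' :: "real \<Rightarrow> real \<times> real"
  assumes intv: "is_interval I"
    and smooth: "smooth_curve I C C'"
    and reg: "regular_curve I C'"
    and left: "left_oriented I C C'"
    and np: "no_parallel_tangents I C'"
begin

lemma derC: "t \<in> I \<Longrightarrow> (C has_vector_derivative C' t) (at t within I)"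
  using smooth unfolding smooth_curve_def by (metis One_nat_def)

lemma derC': "\<exists>C''. \<forall>t\<in>I. (C' has_vector_derivative C'' t) (at t within I)"
  using smooth unfolding smooth_curve_def by (metis One_nat_def numeral_2_eq_2)

lemma contC: "continuous_on I C"
  using derC by (meson continuous_on_eq_continuous_within has_vector_derivative_continuous)

lemma contC': "continuous_on I C'"
  using derC' by (meson continuous_on_eq_continuous_within has_vector_derivative_continuous)

lemma memI: "s \<in> I \<Longrightarrow> t \<in> I \<Longrightarrow> s \<le> r \<Longrightarrow> r \<le> t \<Longrightarrow> r \<in> I"
  using intv by (meson mem_is_interval_1_I)

lemma memI': "s \<in> I \<Longrightarrow> t \<in> I \<Longrightarrow> s < r \<Longrightarrow> r < t \<Longrightarrow> r \<in> I"
  using memI[of s t r] by auto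

lemma intI: "s \<in> I \<Longrightarrow> t \<in> I \<Longrightarrow> s < r \<Longrightarrow> r < t \<Longrightarrow> r \<in> interior I"
proof -
  assume a: "s \<in> I" "t \<in> I" "s < r" "r < t"
  have "{s<..<t} \<subseteq> I" using memI'[OF a(1,2)] by auto
  hence "{s<..<t} \<subseteq> interior I" by (simp add: interior_maximal)
  thus ?thesis using a by auto
qed

lemma derC_at: "t \<in> interior I \<Longrightarrow> (C has_vector_derivative C' t) (at t)"
  using derC at_within_interior interior_subset by (metis subsetD)

lemma cross_der: "t \<in> I \<Longrightarrow> ((\<lambda>r. cross2 d (C r)) has_real_derivative cross2 d (C' t)) (at t within I)"
  unfolding has_real_derivative_iff_has_vector_derivative
  using bounded_bilinear.has_vector_derivative[OF bb_cross2 has_vector_derivative_const derC]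
  by (simp add: bounded_bilinear.zero_left[OF bb_cross2])

lemma cross_mvt:
  assumes "s \<in> I" "t \<in> I" "s < t"
  shows "\<exists>\<xi>. s < \<xi> \<and> \<xi> < t \<and> cross2 d (C t) - cross2 d (C s) = (t - s) * cross2 d (C' \<xi>)"
proof -
  have sub: "{s..t} \<subseteq> I" using memI[OF assms(1,2)] by auto
  have c: "continuous_on {s..t} (\<lambda>r. cross2 d (C r))"
    using continuous_on_subset[OF contC sub]
    by (intro bounded_bilinear.continuous_on[OF bb_cross2]) auto
  have D: "s < x \<Longrightarrow> x < t \<Longrightarrow> ((\<lambda>r. cross2 d (C r)) has_real_derivative cross2 d (C' x)) (at x)" for x
    using cross_der[of x d] intI[OF assms(1,2)] at_within_interior memI[OF assms(1,2)]
    by (metis less_imp_le)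
  obtain l z where z: "s < z" "z < t" "DERIV (\<lambda>r. cross2 d (C r)) z :> l"
       "cross2 d (C t) - cross2 d (C s) = (t - s) * l"
    using MVT[OF assms(3) c] D real_differentiable_def by meson
  have "l = cross2 d (C' z)" using DERIV_unique[OF z(3) D[OF z(1,2)]] .
  thus ?thesis using z by blast
qed


end

lemma cross2_simps:
  "cross2 (X + Y) Z = cross2 X Z + cross2 Y Z" "cross2 Z (X + Y) = cross2 Z X + cross2 Z Y"
  "cross2 (X - Y) Z = cross2 X Z - cross2 Y Z" "cross2 Z (X - Y) = cross2 Z X - cross2 Z Y"
  "cross2 (a *\<^sub>R X) Z = a * cross2 X Z" "cross2 Z (a *\<^sub>R X) = a * cross2 Z X"
  "cross2 (- X) Z = - cross2 X Z" "cross2 Z (- X) = - cross2 Z X"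
  "cross2 X X = 0" "cross2 0 Z = 0" "cross2 Z 0 = 0"
  by (auto simp: cross2_def algebra_simps)

lemma cross2_swap: "cross2 Y X = - cross2 X Y"
  by (simp add: cross2_def)

context cv begin

lemma L1: assumes "s \<in> I" "t \<in> I" "s < t" shows "cross2 (C' s) (C' t) > 0"
proof (rule ccontr)
  assume "\<not> ?thesis"
  moreover have "cross2 (C' s) (C' t) \<noteq> 0" using np assms unfolding no_parallel_tangents_def by auto
  ultimately have neg: "cross2 (C' s) (C' t) < 0" by auto
  have "cross2 (C' s) (C t - C s) \<ge> 0" using left assms unfolding left_oriented_def by auto
  moreover obtain \<xi> where xi: "s < \<xi>" "\<xi> < t" "cross2 (C' s) (C t) - cross2 (C' s) (C s) = (t - s) * cross2 (C' s) (C' \<xi>)"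
    using cross_mvt[OF assms] by blast
  ultimately have "(t - s) * cross2 (C' s) (C' \<xi>) \<ge> 0" by (simp add: cross2_simps)
  hence "cross2 (C' s) (C' \<xi>) \<ge> 0" using assms(3) by (simp add: zero_le_mult_iff)
  have xiI: "\<xi> \<in> I" using memI'[OF assms(1,2) xi(1,2)] .
  have sub2: "{\<xi>..t} \<subseteq> I" using memI[OF xiI assms(2)] by auto
  have "continuous_on {\<xi>..t} (\<lambda>r. cross2 (C' s) (C' r))"
    using continuous_on_subset[OF contC' sub2]
    by (intro bounded_bilinear.continuous_on[OF bb_cross2]) auto
  then obtain r where r: "\<xi> \<le> r" "r \<le> t" "cross2 (C' s) (C' r) = 0"
    using IVT2'[of "\<lambda>r. cross2 (C' s) (C' r)" t 0 \<xi>] neg \<open>cross2 (C' s) (C' \<xi>) \<ge> 0\<close> xi by auto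
  have "r \<in> I" using r memI[OF xiI assms(2)] by auto
  thus False using np r xi assms unfolding no_parallel_tangents_def by auto
qed

lemma L3: assumes "c \<in> I" "s \<in> I" "t \<in> I" "c \<le> s" "s < t" shows "cross2 (C' c) (C t - C s) > 0"
proof -
  obtain \<xi> where xi: "s < \<xi>" "\<xi> < t" "cross2 (C' c) (C t) - cross2 (C' c) (C s) = (t - s) * cross2 (C' c) (C' \<xi>)"
    using cross_mvt[OF assms(2,3,5)] by blast
  have "\<xi> \<in> I" using memI'[OF assms(2,3) xi(1,2)] .
  hence "cross2 (C' c) (C' \<xi>) > 0" using L1 assms xi by auto
  thus ?thesis using xi assms by (simp add: cross2_simps)
qed

lemma L3': assumes "c \<in> I" "s \<in> I" "t \<in> I" "t \<le> c" "s < t" shows "cross2 (C' c) (C t - C s) < 0"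
proof -
  obtain \<xi> where xi: "s < \<xi>" "\<xi> < t" "cross2 (C' c) (C t) - cross2 (C' c) (C s) = (t - s) * cross2 (C' c) (C' \<xi>)"
    using cross_mvt[OF assms(2,3,5)] by blast
  have "\<xi> \<in> I" using memI'[OF assms(2,3) xi(1,2)] .
  hence "cross2 (C' \<xi>) (C' c) > 0" using L1 assms xi by auto
  hence "cross2 (C' c) (C' \<xi>) < 0" by (simp add: cross2_swap[of "C' c"])
  thus ?thesis using xi assms by (simp add: cross2_simps mult_pos_neg)
qed

lemma L2: assumes "c \<in> I" "s \<in> I" "s \<noteq> c" shows "cross2 (C' c) (C s - C c) > 0"
proof (cases "c < s")
  case True thus ?thesis using L3[OF assms(1,1,2)] by auto
next
  case False
  hence "s < c" using assms by auto
  hence "cross2 (C' c) (C c - C s) < 0" using L3'[OF assms(1,2,1)] by auto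
  thus ?thesis by (simp add: cross2_simps)
qed

lemma sgn_in: assumes "a \<in> I" "b \<in> I" "a < r" "r < b"
  shows "cross2 (C b - C a) (C r - C a) < 0"
proof -
  have rI: "r \<in> I" using memI'[OF assms] .
  obtain \<xi> where xi: "a < \<xi>" "\<xi> < r" "cross2 (C b - C r) (C r) - cross2 (C b - C r) (C a) = (r - a) * cross2 (C b - C r) (C' \<xi>)"
    using cross_mvt[OF assms(1) rI assms(3)] by blast
  have "\<xi> \<in> I" using memI'[OF assms(1) rI xi(1,2)] .
  hence "cross2 (C' \<xi>) (C b - C r) > 0" using L3[OF _ rI assms(2)] xi assms by auto
  hence "cross2 (C b - C r) (C' \<xi>) < 0" by (simp add: cross2_swap[of "C b - C r"])
  hence "cross2 (C b - C r) (C r - C a) < 0" using xi assms by (simp add: cross2_simps mult_pos_neg)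
  moreover have "cross2 (C b - C a) (C r - C a) = cross2 (C b - C r) (C r - C a)"
    by (simp add: cross2_def algebra_simps)
  ultimately show ?thesis by simp
qed

lemma sgn_right: assumes "a \<in> I" "b \<in> I" "r \<in> I" "a < b" "b < r"
  shows "cross2 (C b - C a) (C r - C a) > 0"
proof -
  obtain \<xi> where xi: "b < \<xi>" "\<xi> < r" "cross2 (C b - C a) (C r) - cross2 (C b - C a) (C b) = (r - b) * cross2 (C b - C a) (C' \<xi>)"
    using cross_mvt[OF assms(2,3,5)] by blast
  have "\<xi> \<in> I" using memI'[OF assms(2,3) xi(1,2)] .
  hence "cross2 (C' \<xi>) (C b - C a) < 0" using L3'[OF _ assms(1,2)] xi assms by auto
  hence "cross2 (C b - C a) (C' \<xi>) > 0" by (simp add: cross2_swap[of "C b - C a"])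
  hence "cross2 (C b - C a) (C r - C b) > 0" using xi assms by (simp add: cross2_simps)
  moreover have "cross2 (C b - C a) (C r - C a) = cross2 (C b - C a) (C r - C b)"
    by (simp add: cross2_def algebra_simps)
  ultimately show ?thesis by simp
qed

lemma sgn_left: assumes "a \<in> I" "b \<in> I" "r \<in> I" "a < b" "r < a"
  shows "cross2 (C b - C a) (C r - C a) > 0"
proof -
  obtain \<xi> where xi: "r < \<xi>" "\<xi> < a" "cross2 (C b - C a) (C a) - cross2 (C b - C a) (C r) = (a - r) * cross2 (C b - C a) (C' \<xi>)"
    using cross_mvt[OF assms(3,1,5)] by blast
  have "\<xi> \<in> I" using memI'[OF assms(3,1) xi(1,2)] .
  hence "cross2 (C' \<xi>) (C b - C a) > 0" using L3[OF _ assms(1,2)] xi assms by auto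
  hence "cross2 (C b - C a) (C' \<xi>) < 0" by (simp add: cross2_swap[of "C b - C a"])
  hence "(a - r) * cross2 (C b - C a) (C' \<xi>) < 0" using xi by (simp add: mult_pos_neg)
  thus ?thesis using xi by (simp add: cross2_simps)
qed

lemma phi_pos: assumes "a \<in> I" "b \<in> I" "a \<noteq> b" "r \<in> I"
  shows "cross2 (C r - (1/2) *\<^sub>R (C a + C b)) (C' r) > 0"
proof -
  have e: "cross2 (C r - (1/2) *\<^sub>R (C a + C b)) (C' r) = (1/2) * cross2 (C' r) (C a - C r) + (1/2) * cross2 (C' r) (C b - C r)"
    by (simp add: cross2_def algebra_simps)
  have ge: "cross2 (C' r) (C a - C r) \<ge> 0" "cross2 (C' r) (C b - C r) \<ge> 0"
    using left assms unfolding left_oriented_def by auto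
  have "cross2 (C' r) (C a - C r) > 0 \<or> cross2 (C' r) (C b - C r) > 0"
    using L2[OF assms(4)] assms by (cases "a = r") auto
  thus ?thesis using e ge by linarith
qed

end

lemma arc_inv:
  fixes \<sigma> \<Phi> s' p :: "real \<Rightarrow> real"
  assumes lt: "r0 < r1" and cs: "continuous_on {r0..r1} \<sigma>"
    and ds: "\<And>\<rho>. r0 < \<rho> \<Longrightarrow> \<rho> < r1 \<Longrightarrow> DERIV \<sigma> \<rho> :> s' \<rho> \<and> s' \<rho> > 0"
    and cp: "continuous_on {r0..r1} \<Phi>"
    and dp: "\<And>\<rho>. r0 < \<rho> \<Longrightarrow> \<rho> < r1 \<Longrightarrow> DERIV \<Phi> \<rho> :> p \<rho>"
  shows "\<exists>g. (\<forall>z\<in>{\<sigma> r0..\<sigma> r1}. g z \<in> {r0..r1} \<and> \<sigma> (g z) = z) \<and> g (\<sigma> r0) = r0 \<and> g (\<sigma> r1) = r1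
     \<and> \<sigma> r0 < \<sigma> r1 \<and> continuous_on {\<sigma> r0..\<sigma> r1} (\<lambda>z. \<Phi> (g z))
     \<and> (\<forall>z. \<sigma> r0 < z \<and> z < \<sigma> r1 \<longrightarrow> r0 < g z \<and> g z < r1 \<and> DERIV (\<lambda>z. \<Phi> (g z)) z :> p (g z) / s' (g z))"
proof -
  have mono: "\<sigma> a < \<sigma> b" if "r0 \<le> a" "a < b" "b \<le> r1" for a b
  proof (rule DERIV_pos_imp_increasing_open[OF that(2)])
    show "\<And>x. a < x \<Longrightarrow> x < b \<Longrightarrow> \<exists>y. DERIV \<sigma> x :> y \<and> 0 < y" using ds that by force
    show "continuous_on {a..b} \<sigma>" using continuous_on_subset[OF cs] that by auto
  qed
  have inj: "inj_on \<sigma> {r0..r1}"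
    by (rule inj_onI) (metis atLeastAtMost_iff linorder_neqE_linordered_idom mono order_less_irrefl)
  have img: "\<sigma> ` {r0..r1} = {\<sigma> r0..\<sigma> r1}"
  proof
    show "\<sigma> ` {r0..r1} \<subseteq> {\<sigma> r0..\<sigma> r1}"
      using mono lt by (auto simp: order_le_less)
    show "{\<sigma> r0..\<sigma> r1} \<subseteq> \<sigma> ` {r0..r1}"
    proof
      fix z assume "z \<in> {\<sigma> r0..\<sigma> r1}"
      then obtain x where "r0 \<le> x" "x \<le> r1" "\<sigma> x = z"
        using IVT'[of \<sigma> r0 z r1] cs lt by auto
      thus "z \<in> \<sigma> ` {r0..r1}" by auto
    qed
  qed
  define g where "g = the_inv_into {r0..r1} \<sigma>"
  have g1: "g z \<in> {r0..r1} \<and> \<sigma> (g z) = z" if "z \<in> {\<sigma> r0..\<sigma> r1}" for z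
    using that img inj unfolding g_def
    by (metis f_the_inv_into_f the_inv_into_into order_refl)
  have g0: "g (\<sigma> x) = x" if "x \<in> {r0..r1}" for x
    using inj that unfolding g_def by (simp add: the_inv_into_f_f)
  have lt2: "\<sigma> r0 < \<sigma> r1" using mono lt by auto
  have cg: "continuous_on {\<sigma> r0..\<sigma> r1} g"
    using continuous_on_inv[OF cs compact_Icc, of g] g0 img by auto
  have cpg: "continuous_on {\<sigma> r0..\<sigma> r1} (\<lambda>z. \<Phi> (g z))"
    by (rule continuous_on_compose2[OF cp cg]) (use g1 in auto)
  have der: "r0 < g z \<and> g z < r1 \<and> DERIV (\<lambda>z. \<Phi> (g z)) z :> p (g z) / s' (g z)"
    if z: "\<sigma> r0 < z" "z < \<sigma> r1" for z
  proof -
    have gz: "g z \<in> {r0..r1}" "\<sigma> (g z) = z" using g1 z by auto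
    have "g z \<noteq> r0" using gz z by auto
    moreover have "g z \<noteq> r1" using gz z by auto
    ultimately have gzi: "r0 < g z" "g z < r1" using gz by auto
    have ic: "isCont g z"
      using continuous_on_interior[OF cg] z by auto
    have dg: "DERIV g z :> inverse (s' (g z))"
    proof (rule DERIV_inverse_function[where a="\<sigma> r0" and b="\<sigma> r1"])
      show "DERIV \<sigma> (g z) :> s' (g z)" using ds gzi by auto
      show "s' (g z) \<noteq> 0" using ds gzi by force
    qed (use z g1 ic in auto)
    have "DERIV (\<lambda>z. \<Phi> (g z)) z :> p (g z) * inverse (s' (g z))"
      using DERIV_chain2[OF dp[OF gzi] dg] .
    thus ?thesis using gzi by (simp add: divide_inverse)
  qed
  show ?thesis
    apply (rule exI[of _ g])
    using g1 g0 lt lt2 cpg der by auto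
qed

lemma mono_compare:
  fixes \<sigma> \<Phi> s' p :: "real \<Rightarrow> real"
  assumes lt: "r0 < r1" "c0 < c1"
    and cs: "continuous_on {r0..r1} \<sigma>" "continuous_on {c0..c1} \<sigma>"
    and ds: "\<And>\<rho>. r0 < \<rho> \<Longrightarrow> \<rho> < r1 \<Longrightarrow> DERIV \<sigma> \<rho> :> s' \<rho> \<and> s' \<rho> > 0"
            "\<And>\<rho>. c0 < \<rho> \<Longrightarrow> \<rho> < c1 \<Longrightarrow> DERIV \<sigma> \<rho> :> s' \<rho> \<and> s' \<rho> > 0"
    and cp: "continuous_on {r0..r1} \<Phi>" "continuous_on {c0..c1} \<Phi>"
    and dp: "\<And>\<rho>. r0 < \<rho> \<Longrightarrow> \<rho> < r1 \<Longrightarrow> DERIV \<Phi> \<rho> :> p \<rho>"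
            "\<And>\<rho>. c0 < \<rho> \<Longrightarrow> \<rho> < c1 \<Longrightarrow> DERIV \<Phi> \<rho> :> p \<rho>"
    and e0: "\<sigma> r0 = \<sigma> c0" and e1: "\<sigma> r1 = \<sigma> c1"
    and key: "\<And>\<rho> c. r0 < \<rho> \<Longrightarrow> \<rho> < r1 \<Longrightarrow> c0 < c \<Longrightarrow> c < c1 \<Longrightarrow> \<sigma> \<rho> = \<sigma> c \<Longrightarrow> p \<rho> / s' \<rho> < p c / s' c"
  shows "\<Phi> r1 - \<Phi> r0 < \<Phi> c1 - \<Phi> c0"
proof -
  obtain gi where gi: "\<forall>z\<in>{\<sigma> r0..\<sigma> r1}. gi z \<in> {r0..r1} \<and> \<sigma> (gi z) = z" "gi (\<sigma> r0) = r0" "gi (\<sigma> r1) = r1"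
     "\<sigma> r0 < \<sigma> r1" "continuous_on {\<sigma> r0..\<sigma> r1} (\<lambda>z. \<Phi> (gi z))"
     "\<forall>z. \<sigma> r0 < z \<and> z < \<sigma> r1 \<longrightarrow> r0 < gi z \<and> gi z < r1 \<and> DERIV (\<lambda>z. \<Phi> (gi z)) z :> p (gi z) / s' (gi z)"
    using arc_inv[OF lt(1) cs(1) ds(1) cp(1) dp(1)] by blast
  obtain go where go: "\<forall>z\<in>{\<sigma> c0..\<sigma> c1}. go z \<in> {c0..c1} \<and> \<sigma> (go z) = z" "go (\<sigma> c0) = c0" "go (\<sigma> c1) = c1"
     "\<sigma> c0 < \<sigma> c1" "continuous_on {\<sigma> c0..\<sigma> c1} (\<lambda>z. \<Phi> (go z))"
     "\<forall>z. \<sigma> c0 < z \<and> z < \<sigma> c1 \<longrightarrow> c0 < go z \<and> go z < c1 \<and> DERIV (\<lambda>z. \<Phi> (go z)) z :> p (go z) / s' (go z)"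
    using arc_inv[OF lt(2) cs(2) ds(2) cp(2) dp(2)] by blast
  have "(\<lambda>z. \<Phi> (go z) - \<Phi> (gi z)) (\<sigma> r0) < (\<lambda>z. \<Phi> (go z) - \<Phi> (gi z)) (\<sigma> r1)"
  proof (rule DERIV_pos_imp_increasing_open[OF gi(4)])
    fix z assume z: "\<sigma> r0 < z" "z < \<sigma> r1"
    have A: "r0 < gi z \<and> gi z < r1 \<and> DERIV (\<lambda>z. \<Phi> (gi z)) z :> p (gi z) / s' (gi z)" using gi(6) z by blast
    have B: "c0 < go z \<and> go z < c1 \<and> DERIV (\<lambda>z. \<Phi> (go z)) z :> p (go z) / s' (go z)" using go(6) z e0 e1 by auto
    have "\<sigma> (gi z) = \<sigma> (go z)" using gi(1) go(1) z e0 e1 by auto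
    hence "p (gi z) / s' (gi z) < p (go z) / s' (go z)" using key A B by blast
    thus "\<exists>y. DERIV (\<lambda>z. \<Phi> (go z) - \<Phi> (gi z)) z :> y \<and> 0 < y"
      using DERIV_diff[OF conjunct2[OF conjunct2[OF B]] conjunct2[OF conjunct2[OF A]]] by force
  next
    show "continuous_on {\<sigma> r0..\<sigma> r1} (\<lambda>z. \<Phi> (go z) - \<Phi> (gi z))"
      using continuous_on_diff[OF go(5)[unfolded e0[symmetric] e1[symmetric]] gi(5)] by simp
  qed
  thus ?thesis using gi(2,3) go(2,3) e0 e1 by simp
qed

lemma key_alg:
  fixes wr wc e d :: "real \<times> real"
  assumes Dr: "cross2 wr e < 0" and Dc: "cross2 wc e > 0"
    and eq: "(wr \<bullet> e) / cross2 wr e = (wc \<bullet> e) / cross2 wc e"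
    and G: "cross2 d (- (wr + wc)) > 0" and ph: "cross2 wc d > 0"
  shows "(cross2 wr e)^2 < (cross2 wc e)^2"
proof -
  define k where "k = cross2 wc e / cross2 wr e"
  have eq2: "(wr \<bullet> e) * cross2 wc e = (wc \<bullet> e) * cross2 wr e"
    using eq Dr Dc by (simp add: field_simps)
  obtain a1 a2 where a: "wr = (a1, a2)" by fastforce
  obtain b1 b2 where b: "wc = (b1, b2)" by fastforce
  obtain e1 e2 where ee: "e = (e1, e2)" by fastforce
  have eq3: "(a1*e1 + a2*e2) * (b1*e2 - b2*e1) = (b1*e1 + b2*e2) * (a1*e2 - a2*e1)"
    using eq2 by (simp add: a b ee cross2_def inner_prod_def)
  have "(e1^2 + e2^2) * (a1*b2 - a2*b1) = 0"
    using eq3 by (simp add: algebra_simps power2_eq_square)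
  moreover have "e1^2 + e2^2 \<noteq> 0" using Dr by (auto simp: ee cross2_def)
  ultimately have "a1*b2 - a2*b1 = 0" using mult_eq_0_iff by blast
  hence par: "a1*b2 = a2*b1" by simp
  have D0: "a1*e2 - a2*e1 \<noteq> 0" using Dr by (simp add: a ee cross2_def)
  have kdef: "k = (b1*e2 - b2*e1) / (a1*e2 - a2*e1)" by (simp add: k_def a b ee cross2_def)
  have "b1 * (a1*e2 - a2*e1) = a1 * (b1*e2 - b2*e1)" using par by (simp add: algebra_simps)
  hence b1k: "b1 = k * a1" using D0 by (simp add: kdef field_simps)
  have "b2 * (a1*e2 - a2*e1) = a2 * (b1*e2 - b2*e1)" using par by (simp add: algebra_simps)
  hence b2k: "b2 = k * a2" using D0 by (simp add: kdef field_simps)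
  have wck: "wc = k *\<^sub>R wr" using b1k b2k a b by simp
  have kneg: "k < 0" using Dr Dc by (simp add: k_def divide_pos_neg)
  define q where "q = cross2 d wr"
  have "cross2 wc d = - k * q" by (simp add: wck q_def cross2_def algebra_simps)
  hence "(- k) * q > 0" using ph by simp
  hence "q > 0" using kneg by (metis mult_pos_pos neg_0_less_iff_less zero_less_mult_pos)
  have "cross2 d (- (wr + wc)) = - q * (1 + k)" by (simp add: wck q_def cross2_def algebra_simps)
  hence "q * (1 + k) < 0" using G by simp
  hence "k < -1" using \<open>q > 0\<close> by (simp add: mult_less_0_iff)
  have "cross2 wc e = k * cross2 wr e" by (simp add: wck cross2_def algebra_simps)
  hence sq: "(cross2 wc e)^2 = k^2 * (cross2 wr e)^2" by (simp add: power_mult_distrib)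
  have k2: "k^2 > 1"
  proof -
    have "(-k) * (-k) > 1 * 1" using \<open>k < -1\<close> by (intro mult_strict_mono) auto
    thus ?thesis by (simp add: power2_eq_square)
  qed
  have X: "(cross2 wr e)^2 > 0" using Dr by simp
  have "1 * (cross2 wr e)^2 < k^2 * (cross2 wr e)^2"
    by (rule mult_strict_right_mono[OF k2 X])
  thus ?thesis unfolding sq by simp
qed

context cv begin

definition kap where "kap r = cross2 (C r) (C' r)"
definition Phi where "Phi x lo r = integral {lo..r} kap - cross2 x (C r)"

lemma kap_cont: "continuous_on I kap"
  unfolding kap_def by (rule bounded_bilinear.continuous_on[OF bb_cross2 contC contC'])

lemma subI: "s \<in> I \<Longrightarrow> t \<in> I \<Longrightarrow> {s..t} \<subseteq> I"
  using memI[of s t] by auto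

lemma kap_int: "s \<in> I \<Longrightarrow> t \<in> I \<Longrightarrow> kap integrable_on {s..t}"
  by (rule integrable_continuous_real) (meson continuous_on_subset kap_cont subI)

lemma chord_area_eq:
  assumes "s \<in> I" "t \<in> I" "s \<le> t"
  shows "chord_area C C' s t = (1/2) * (integral {s..t} kap - cross2 (C s) (C t))"
proof -
  have sub: "{s..t} \<subseteq> I" using subI assms by auto
  have fd: "((\<lambda>r. cross2 (C s) (C r)) has_vector_derivative cross2 (C s) (C' x)) (at x within {s..t})"
    if "x \<in> {s..t}" for x
  proof -
    have xI: "x \<in> I" using that sub by auto
    show ?thesis
    using bounded_bilinear.has_vector_derivative[OF bb_cross2 has_vector_derivative_const
        has_vector_derivative_within_subset[OF derC[OF xI] sub], of "C s"]
    by (simp add: bounded_bilinear.zero_left[OF bb_cross2])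
  qed
  have h1: "((\<lambda>r. cross2 (C s) (C' r)) has_integral (cross2 (C s) (C t) - cross2 (C s) (C s))) {s..t}"
    by (rule fundamental_theorem_of_calculus[OF assms(3) fd])
  have h2: "(kap has_integral integral {s..t} kap) {s..t}"
    using kap_int assms by (simp add: integrable_integral)
  have "((\<lambda>r. kap r - cross2 (C s) (C' r)) has_integral (integral {s..t} kap - cross2 (C s) (C t))) {s..t}"
    using has_integral_diff[OF h2 h1] by (simp add: cross2_simps)
  moreover have "(\<lambda>r. kap r - cross2 (C s) (C' r)) = (\<lambda>r. cross2 (C r - C s) (C' r))"
    by (auto simp: kap_def cross2_simps fun_eq_iff)
  ultimately show ?thesis unfolding chord_area_def using integral_unique by metis
qed

lemma Phi_diff:
  assumes "lo \<in> I" "t \<in> I" "lo \<le> s" "s \<le> t"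
  shows "Phi x lo t - Phi x lo s = integral {s..t} kap - cross2 x (C t - C s)"
proof -
  have "integral {lo..s} kap + integral {s..t} kap = integral {lo..t} kap"
    using Henstock_Kurzweil_Integration.integral_combine[where a=lo and c=s and b=t and f=kap] assms kap_int[of lo t] by linarith
  thus ?thesis unfolding Phi_def by (simp add: cross2_simps)
qed

lemma chord_area_Phi:
  assumes "lo \<in> I" "s \<in> I" "t \<in> I" "lo \<le> s" "s \<le> t" "cross2 (x - C s) (C t - C s) = 0"
  shows "chord_area C C' s t = (1/2) * (Phi x lo t - Phi x lo s)"
proof -
  have "cross2 x (C t - C s) = cross2 (C s) (C t)"
    using assms(6) by (simp add: cross2_def algebra_simps)
  thus ?thesis using chord_area_eq[OF assms(2,3,5)] Phi_diff[OF assms(1,3,4,5)] by simp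
qed

lemma Phi_cont: assumes "lo \<in> I" "hi \<in> I" shows "continuous_on {lo..hi} (Phi x lo)"
proof -
  have sub: "{lo..hi} \<subseteq> I" using subI assms by auto
  have "continuous_on {lo..hi} (\<lambda>r. integral {lo..r} kap)"
    by (rule indefinite_integral_continuous_1) (use kap_int assms in auto)
  moreover have "continuous_on {lo..hi} (\<lambda>r. cross2 x (C r))"
    by (rule bounded_bilinear.continuous_on[OF bb_cross2 continuous_on_const continuous_on_subset[OF contC sub]])
  ultimately show ?thesis unfolding Phi_def by (intro continuous_on_diff)
qed

lemma Phi_der: assumes "lo \<in> I" "hi \<in> I" "lo < r" "r < hi"
  shows "DERIV (Phi x lo) r :> cross2 (C r - x) (C' r)"
proof -
  have sub: "{lo..hi} \<subseteq> I" using subI assms by auto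
  have ri: "r \<in> interior I" using intI assms by auto
  have int: "r \<in> interior {lo..hi}" using assms by auto
  have "((\<lambda>r. integral {lo..r} kap) has_real_derivative kap r) (at r within {lo..hi})"
    by (rule integral_has_real_derivative) (use continuous_on_subset[OF kap_cont sub] assms in auto)
  hence d1: "((\<lambda>r. integral {lo..r} kap) has_real_derivative kap r) (at r)"
    using at_within_interior[OF int] by simp
  have d2: "((\<lambda>r. cross2 x (C r)) has_real_derivative cross2 x (C' r)) (at r)"
    using cross_der[OF subsetD[OF interior_subset ri], of x] at_within_interior[OF ri] by simp
  have eq: "Phi x lo = (\<lambda>r. integral {lo..r} kap - cross2 x (C r))"
    by (simp add: fun_eq_iff Phi_def)
  have val: "kap r - cross2 x (C' r) = cross2 (C r - x) (C' r)"
    by (simp add: kap_def cross2_def algebra_simps)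
  show ?thesis using DERIV_diff[OF d1 d2] unfolding eq val .
qed

end

lemma iden: "(d \<bullet> e) * cross2 w e - (w \<bullet> e) * cross2 d e = (e \<bullet> e) * cross2 w d"
  by (simp add: cross2_def inner_prod_def algebra_simps)

context cv begin

lemma der_inner: "t \<in> interior I \<Longrightarrow> DERIV (\<lambda>r. (C r - x) \<bullet> e) t :> C' t \<bullet> e"
proof -
  assume t: "t \<in> interior I"
  have "((\<lambda>r. C r - x) has_vector_derivative C' t - 0) (at t)"
    by (rule has_vector_derivative_diff[OF derC_at[OF t] has_vector_derivative_const])
  from bounded_linear.has_vector_derivative[OF bounded_linear_inner_left this, of e]
  show ?thesis by (simp add: has_real_derivative_iff_has_vector_derivative)
qed

lemma der_crossl: "t \<in> interior I \<Longrightarrow> DERIV (\<lambda>r. cross2 (C r - x) e) t :> cross2 (C' t) e"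
proof -
  assume t: "t \<in> interior I"
  have "((\<lambda>r. C r - x) has_vector_derivative C' t - 0) (at t)"
    by (rule has_vector_derivative_diff[OF derC_at[OF t] has_vector_derivative_const])
  from bounded_linear.has_vector_derivative[OF bounded_bilinear.bounded_linear_left[OF bb_cross2] this, of e]
  show ?thesis by (simp add: has_real_derivative_iff_has_vector_derivative)
qed

lemma cont_w: "s \<in> I \<Longrightarrow> t \<in> I \<Longrightarrow> continuous_on {s..t} (\<lambda>r. C r - x)"
  by (rule continuous_on_diff[OF continuous_on_subset[OF contC subI] continuous_on_const])

lemma arc:
  assumes I: "lo \<in> I" "hi \<in> I" "r0 \<in> I" "r1 \<in> I" "c0 \<in> I" "c1 \<in> I"
    and ord: "lo \<le> r0" "lo \<le> c0" "r1 \<le> hi" "c1 \<le> hi" "r0 < r1" "c0 < c1"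
    and phi: "\<And>\<rho>. \<rho> \<in> I \<Longrightarrow> cross2 (C \<rho> - x) (C' \<rho>) > 0"
    and Dr: "\<And>\<rho>. \<rho> \<in> {r0..r1} \<Longrightarrow> cross2 (C \<rho> - x) e < 0"
    and Dc: "\<And>\<rho>. \<rho> \<in> {c0..c1} \<Longrightarrow> cross2 (C \<rho> - x) e > 0"
    and par0: "cross2 (C r0 - x) (C c0 - x) = 0" and par1: "cross2 (C r1 - x) (C c1 - x) = 0"
    and G: "\<And>\<rho> c. r0 < \<rho> \<Longrightarrow> \<rho> < r1 \<Longrightarrow> c0 < c \<Longrightarrow> c < c1 \<Longrightarrow> cross2 (C \<rho> - x) (C c - x) = 0
              \<Longrightarrow> cross2 (C' c) (- ((C \<rho> - x) + (C c - x))) > 0"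
  shows "Phi x lo r1 - Phi x lo r0 < Phi x lo c1 - Phi x lo c0"
proof -
  define \<sigma> where "\<sigma> r = ((C r - x) \<bullet> e) / cross2 (C r - x) e" for r
  define s' where "s' r = (e \<bullet> e) * cross2 (C r - x) (C' r) / (cross2 (C r - x) e)^2" for r
  define p where "p r = cross2 (C r - x) (C' r)" for r
  have e0: "e \<noteq> 0" using Dr[of r0] ord by (auto simp: cross2_simps)
  hence ee: "e \<bullet> e > 0" by simp
  have cs: "continuous_on {a..b} \<sigma>" if "a \<in> I" "b \<in> I" "\<And>\<rho>. \<rho> \<in> {a..b} \<Longrightarrow> cross2 (C \<rho> - x) e \<noteq> 0" for a b
    unfolding \<sigma>_def
    by (rule continuous_on_divide[OF continuous_on_inner[OF cont_w[OF that(1,2)] continuous_on_const]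
            bounded_linear.continuous_on[OF bounded_bilinear.bounded_linear_left[OF bb_cross2] cont_w[OF that(1,2)]]])
       (use that in auto)
  have ds: "DERIV \<sigma> \<rho> :> s' \<rho> \<and> s' \<rho> > 0" if "a \<in> I" "b \<in> I" "a < \<rho>" "\<rho> < b" "cross2 (C \<rho> - x) e \<noteq> 0" for a b \<rho>
  proof
    have ri: "\<rho> \<in> interior I" using intI that by auto
    have rI: "\<rho> \<in> I" using interior_subset ri by auto
    have "DERIV \<sigma> \<rho> :> ((C' \<rho> \<bullet> e) * cross2 (C \<rho> - x) e - ((C \<rho> - x) \<bullet> e) * cross2 (C' \<rho>) e) / (cross2 (C \<rho> - x) e * cross2 (C \<rho> - x) e)"
      unfolding \<sigma>_def by (rule DERIV_divide[OF der_inner[OF ri] der_crossl[OF ri] that(5)])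
    moreover have "((C' \<rho> \<bullet> e) * cross2 (C \<rho> - x) e - ((C \<rho> - x) \<bullet> e) * cross2 (C' \<rho>) e) / (cross2 (C \<rho> - x) e * cross2 (C \<rho> - x) e) = s' \<rho>"
      unfolding s'_def iden by (simp add: power2_eq_square)
    ultimately show "DERIV \<sigma> \<rho> :> s' \<rho>" by simp
    show "s' \<rho> > 0" unfolding s'_def using phi[OF rI] ee that(5) by simp
  qed
  show ?thesis
  proof (rule mono_compare[of r0 r1 c0 c1 \<sigma> s' "Phi x lo" p])
    show "r0 < r1" "c0 < c1" by fact+
    show "continuous_on {r0..r1} \<sigma>" using cs[OF I(3,4)] Dr by force
    show "continuous_on {c0..c1} \<sigma>" using cs[OF I(5,6)] Dc by force
    show "DERIV \<sigma> \<rho> :> s' \<rho> \<and> s' \<rho> > 0" if "r0 < \<rho>" "\<rho> < r1" for \<rho>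
      using ds[OF I(3,4) that] Dr[of \<rho>] that by force
    show "DERIV \<sigma> \<rho> :> s' \<rho> \<and> s' \<rho> > 0" if "c0 < \<rho>" "\<rho> < c1" for \<rho>
      using ds[OF I(5,6) that] Dc[of \<rho>] that by force
    have sub1: "{r0..r1} \<subseteq> {lo..hi}" "{c0..c1} \<subseteq> {lo..hi}" using ord by auto
    show "continuous_on {r0..r1} (Phi x lo)" by (rule continuous_on_subset[OF Phi_cont[OF I(1,2)] sub1(1)])
    show "continuous_on {c0..c1} (Phi x lo)" by (rule continuous_on_subset[OF Phi_cont[OF I(1,2)] sub1(2)])
    show "DERIV (Phi x lo) \<rho> :> p \<rho>" if "r0 < \<rho>" "\<rho> < r1" for \<rho>
      unfolding p_def by (rule Phi_der[OF I(1,2)]) (use that ord in auto)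
    show "DERIV (Phi x lo) \<rho> :> p \<rho>" if "c0 < \<rho>" "\<rho> < c1" for \<rho>
      unfolding p_def by (rule Phi_der[OF I(1,2)]) (use that ord in auto)
    have sig_eq: "\<sigma> a = \<sigma> b" if "cross2 (C a - x) (C b - x) = 0" "cross2 (C a - x) e \<noteq> 0" "cross2 (C b - x) e \<noteq> 0" for a b
    proof -
      have "((C a - x) \<bullet> e) * cross2 (C b - x) e - ((C b - x) \<bullet> e) * cross2 (C a - x) e = (e \<bullet> e) * cross2 (C b - x) (C a - x)"
        by (rule iden)
      also have "\<dots> = 0" using that by (simp add: cross2_swap[of "C b - x"])
      finally show ?thesis unfolding \<sigma>_def
        using that(2,3) by (simp add: field_simps)
    qed
    show "\<sigma> r0 = \<sigma> c0" by (rule sig_eq[OF par0]) (use Dr[of r0] Dc[of c0] ord in auto)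
    show "\<sigma> r1 = \<sigma> c1" by (rule sig_eq[OF par1]) (use Dr[of r1] Dc[of c1] ord in auto)
    show "p \<rho> / s' \<rho> < p c / s' c" if "r0 < \<rho>" "\<rho> < r1" "c0 < c" "c < c1" "\<sigma> \<rho> = \<sigma> c" for \<rho> c
    proof -
      have rI: "\<rho> \<in> I" using memI'[OF I(3,4) that(1,2)] .
      have cI: "c \<in> I" using memI'[OF I(5,6) that(3,4)] .
      have dr: "cross2 (C \<rho> - x) e < 0" using Dr that by auto
      have dc: "cross2 (C c - x) e > 0" using Dc that by auto
      have par: "cross2 (C \<rho> - x) (C c - x) = 0"
      proof -
        have "((C \<rho> - x) \<bullet> e) * cross2 (C c - x) e - ((C c - x) \<bullet> e) * cross2 (C \<rho> - x) e = 0"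
          using that(5) dr dc unfolding \<sigma>_def by (simp add: field_simps)
        hence "(e \<bullet> e) * cross2 (C c - x) (C \<rho> - x) = 0" unfolding iden .
        thus ?thesis using ee by (simp add: cross2_swap[of "C c - x"])
      qed
      have sq: "(cross2 (C \<rho> - x) e)^2 < (cross2 (C c - x) e)^2"
        by (rule key_alg[OF dr dc _ G[OF that(1-4) par] phi[OF cI]]) (use that(5) in \<open>simp add: \<sigma>_def\<close>)
      have "p \<rho> / s' \<rho> = (cross2 (C \<rho> - x) e)^2 / (e \<bullet> e)"
        using phi[OF rI] dr ee unfolding p_def s'_def by (simp add: field_simps)
      moreover have "p c / s' c = (cross2 (C c - x) e)^2 / (e \<bullet> e)"
        using phi[OF cI] dc ee unfolding p_def s'_def by (simp add: field_simps)
      ultimately show ?thesis using sq ee by (simp add: divide_strict_right_mono)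
    qed
  qed
qed

end

lemma I1: assumes "x = (1/2) *\<^sub>R (A + B)" shows "cross2 (A - x) (Z - x) = -(1/2) * cross2 (B - A) (Z - A)"
  unfolding assms by (simp add: cross2_def algebra_simps)
lemma I2: assumes "x = (1/2) *\<^sub>R (A + B)" shows "cross2 (B - x) (Z - x) = (1/2) * cross2 (B - A) (Z - A)"
  unfolding assms by (simp add: cross2_def algebra_simps)
lemma I3: assumes "x = (1 - m) *\<^sub>R S + m *\<^sub>R T" shows "cross2 (Z - x) (S - x) = m * cross2 (T - S) (Z - S)"
  unfolding assms by (simp add: cross2_def algebra_simps)
lemma I4: assumes "x = (1 - m) *\<^sub>R S + m *\<^sub>R T" shows "cross2 (T - x) (Z - x) = (1 - m) * cross2 (T - S) (Z - S)"
  unfolding assms by (simp add: cross2_def algebra_simps)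
lemma I5: assumes "x = (1/2) *\<^sub>R (A + B)" shows "cross2 (A - x) (B - x) = 0"
  unfolding assms by (simp add: cross2_def algebra_simps)
lemma I6: assumes "x = (1 - m) *\<^sub>R S + m *\<^sub>R T" shows "cross2 (S - x) (T - x) = 0"
  unfolding assms by (simp add: cross2_def algebra_simps)
lemma I7: assumes "x = (1/2) *\<^sub>R (A + B)" shows "cross2 (x - A) (B - A) = 0"
  unfolding assms by (simp add: cross2_def field_simps)
lemma I8: assumes "x = (1 - m) *\<^sub>R S + m *\<^sub>R T" shows "cross2 (x - S) (T - S) = 0"
  unfolding assms by (simp add: cross2_def algebra_simps)
lemma I9: fixes A B Z W :: "real \<times> real" assumes "x = (1/2) *\<^sub>R (A + B)" shows "- ((Z - x) + (W - x)) = A + B - Z - W"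
proof -
  have h: "x + x = A + B" unfolding assms by (simp add: scaleR_left_distrib[symmetric])
  have "- ((Z - x) + (W - x)) = (x + x) - Z - W" by (simp add: algebra_simps)
  thus ?thesis unfolding h .
qed
lemma I2': assumes "x = (1/2) *\<^sub>R (A + B)" shows "cross2 (Z - x) (B - x) = -(1/2) * cross2 (B - A) (Z - A)"
  unfolding assms by (simp add: cross2_def algebra_simps)
lemma I5': assumes "x = (1/2) *\<^sub>R (A + B)" shows "cross2 (B - x) (A - x) = 0"
  unfolding assms by (simp add: cross2_def algebra_simps)
lemma I6': assumes "x = (1 - m) *\<^sub>R S + m *\<^sub>R T" shows "cross2 (T - x) (S - x) = 0"
  unfolding assms by (simp add: cross2_def algebra_simps)
lemma I11: assumes "x = (1 - m) *\<^sub>R S + m *\<^sub>R T"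
  shows "cross2 (B - A) (x - A) = (1 - m) * cross2 (B - A) (S - A) + m * cross2 (B - A) (T - A)"
  unfolding assms by (simp add: cross2_def algebra_simps)
lemma I12: fixes A B :: "real \<times> real" shows "(1/2) *\<^sub>R (A + B) = A \<Longrightarrow> A = B" "(1/2) *\<^sub>R (A + B) = B \<Longrightarrow> A = B"
  by (auto simp: prod_eq_iff field_simps)
lemma wsum: "(0::real) < m \<Longrightarrow> m < 1 \<Longrightarrow> (1 - m) * g1 + m * g2 = 0 \<Longrightarrow>
   (g1 = 0 \<and> g2 = 0) \<or> (g1 < 0 \<and> g2 > 0) \<or> (g1 > 0 \<and> g2 < 0)"
proof -
  assume h: "0 < m" "m < 1" "(1 - m) * g1 + m * g2 = 0"
  have p: "1 - m > 0" using h by simp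
  consider "g1 = 0" | "g1 < 0" | "g1 > 0" by linarith
  thus ?thesis
  proof cases
    case 1 thus ?thesis using h by simp
  next
    case 2 hence "(1 - m) * g1 < 0" using p by (simp add: mult_pos_neg)
    hence "m * g2 > 0" using h by linarith
    thus ?thesis using 2 h by (simp add: zero_less_mult_iff)
  next
    case 3 hence "(1 - m) * g1 > 0" using p by simp
    hence "m * g2 < 0" using h by linarith
    thus ?thesis using 3 h by (simp add: mult_less_0_iff)
  qed
qed

lemma E1: fixes W A S x :: "real \<times> real"
  shows "cross2 W ((A - x) - (S - x)) = - (cross2 (A - x) W + cross2 W (S - x))"
  by (simp add: cross2_def algebra_simps)

lemma sgnD: "(g1::real) \<le> 0 \<Longrightarrow> g2 \<ge> 0 \<Longrightarrow> g1 < 0 \<or> g2 > 0 \<Longrightarrow> m > 0 \<Longrightarrow> (1/2)*g1 - m*g2 < 0"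
proof -
  assume h: "g1 \<le> 0" "g2 \<ge> 0" "g1 < 0 \<or> g2 > 0" "m > 0"
  have "m * g2 \<ge> 0" using h by simp
  moreover have "g2 > 0 \<Longrightarrow> m * g2 > 0" using h by simp
  ultimately show ?thesis using h by linarith
qed
lemma sgnD': "(g1::real) \<ge> 0 \<Longrightarrow> g2 \<le> 0 \<Longrightarrow> g1 > 0 \<or> g2 < 0 \<Longrightarrow> m > 0 \<Longrightarrow> (1/2)*g1 - m*g2 > 0"
proof -
  assume h: "g1 \<ge> 0" "g2 \<le> 0" "g1 > 0 \<or> g2 < 0" "m > 0"
  have "m * g2 \<le> 0" using h by (simp add: mult_nonneg_nonpos)
  moreover have "g2 < 0 \<Longrightarrow> m * g2 < 0" using h by (simp add: mult_pos_neg)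
  ultimately show ?thesis using h by linarith
qed

lemma G1: "cross2 d P \<ge> 0 \<Longrightarrow> cross2 d Q < 0 \<Longrightarrow> cross2 d (P - Q) > 0"
  by (simp add: cross2_simps)
lemma G2: "cross2 d P \<ge> 0 \<Longrightarrow> cross2 d Q > 0 \<Longrightarrow> cross2 d (P + Q) > 0"
  by (simp add: cross2_simps)

context cv begin

lemma g_le: assumes "a \<in> I" "b \<in> I" "r \<in> I" "a < b" "a \<le> r" "r \<le> b"
  shows "cross2 (C b - C a) (C r - C a) \<le> 0"
proof -
  consider "r = a" | "r = b" | "a < r \<and> r < b" using assms by linarith
  thus ?thesis using sgn_in[OF assms(1,2), of r] by cases (auto simp: cross2_simps)
qed

lemma g_ge: assumes "a \<in> I" "b \<in> I" "r \<in> I" "a < b" "r \<le> a \<or> b \<le> r"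
  shows "cross2 (C b - C a) (C r - C a) \<ge> 0"
proof -
  consider "r = a" | "r = b" | "r < a" | "b < r" using assms by linarith
  thus ?thesis using sgn_left[OF assms(1,2,3,4)] sgn_right[OF assms(1,2,3,4)]
    by cases (auto simp: cross2_simps)
qed

lemma online: assumes "a \<in> I" "b \<in> I" "a < b" "r \<in> I" "cross2 (C b - C a) (C r - C a) = 0"
  shows "r = a \<or> r = b"
  using sgn_in[OF assms(1,2), of r] sgn_left[OF assms(1,2,4,3)] sgn_right[OF assms(1,2,4,3)] assms(5)
  by (metis linorder_neqE_linordered_idom order_less_irrefl)

lemma case1:
  assumes ab: "a \<in> I" "b \<in> I" and st: "s \<in> I" "t \<in> I"
    and ord: "a < s" "s < b" "b < t"
    and x: "x = (1/2) *\<^sub>R (C a + C b)" and xm: "x = (1 - m) *\<^sub>R C s + m *\<^sub>R C t" and m: "0 < m" "m < 1"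
  shows "chord_area C C' a b < chord_area C C' s t"
proof -
  define e where "e = (C a - x) - (C s - x)"
  have gin: "\<And>r. a < r \<Longrightarrow> r < b \<Longrightarrow> cross2 (C b - C a) (C r - C a) < 0" using sgn_in[OF ab] by auto
  have "Phi x a s - Phi x a a < Phi x a t - Phi x a b"
  proof (rule arc[where e=e])
    show "a \<in> I" "t \<in> I" "a \<in> I" "s \<in> I" "b \<in> I" "t \<in> I" by fact+
    show "a \<le> a" "a \<le> b" "s \<le> t" "t \<le> t" "a < s" "b < t" using ord by auto
    show "cross2 (C \<rho> - x) (C' \<rho>) > 0" if "\<rho> \<in> I" for \<rho> using phi_pos[OF ab _ that] ord x by auto
    show "cross2 (C \<rho> - x) e < 0" if "\<rho> \<in> {a..s}" for \<rho>
    proof -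
      have rI: "\<rho> \<in> I" using that memI[OF ab(1) st(1)] by auto
      have e1: "cross2 (C \<rho> - x) e = - (cross2 (C a - x) (C \<rho> - x) + cross2 (C \<rho> - x) (C s - x))"
        unfolding e_def by (rule E1)
      have A: "cross2 (C a - x) (C \<rho> - x) = -(1/2) * cross2 (C b - C a) (C \<rho> - C a)" by (rule I1[OF x])
      have B: "cross2 (C \<rho> - x) (C s - x) = m * cross2 (C t - C s) (C \<rho> - C s)" by (rule I3[OF xm])
      have g1: "cross2 (C b - C a) (C \<rho> - C a) \<le> 0" using g_le[OF ab rI] ord that by auto
      have g2: "cross2 (C t - C s) (C \<rho> - C s) \<ge> 0" using g_ge[OF st rI] ord that by auto
      have g3: "cross2 (C b - C a) (C \<rho> - C a) < 0 \<or> cross2 (C t - C s) (C \<rho> - C s) > 0"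
      proof (cases "\<rho> = a")
        case True thus ?thesis using sgn_left[OF st ab(1)] ord by auto
      next
        case False thus ?thesis using sgn_in[OF ab, of \<rho>] ord that by auto
      qed
      have "(1/2) * cross2 (C b - C a) (C \<rho> - C a) - m * cross2 (C t - C s) (C \<rho> - C s) < 0"
        by (rule sgnD[OF g1 g2 g3 m(1)])
      thus ?thesis using e1 A B by linarith
    qed
    show "cross2 (C \<rho> - x) e > 0" if "\<rho> \<in> {b..t}" for \<rho>
    proof -
      have rI: "\<rho> \<in> I" using that memI[OF ab(2) st(2)] by auto
      have e1: "cross2 (C \<rho> - x) e = - (cross2 (C a - x) (C \<rho> - x) + cross2 (C \<rho> - x) (C s - x))"
        unfolding e_def by (rule E1)
      have A: "cross2 (C a - x) (C \<rho> - x) = -(1/2) * cross2 (C b - C a) (C \<rho> - C a)" by (rule I1[OF x])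
      have B: "cross2 (C \<rho> - x) (C s - x) = m * cross2 (C t - C s) (C \<rho> - C s)" by (rule I3[OF xm])
      have g1: "cross2 (C b - C a) (C \<rho> - C a) \<ge> 0" using g_ge[OF ab rI] ord that by auto
      have g2: "cross2 (C t - C s) (C \<rho> - C s) \<le> 0" using g_le[OF st rI] ord that by auto
      have g3: "cross2 (C b - C a) (C \<rho> - C a) > 0 \<or> cross2 (C t - C s) (C \<rho> - C s) < 0"
      proof (cases "\<rho> = b")
        case True thus ?thesis using sgn_in[OF st, of b] ord by auto
      next
        case False thus ?thesis using sgn_right[OF ab rI] ord that by auto
      qed
      have "(1/2) * cross2 (C b - C a) (C \<rho> - C a) - m * cross2 (C t - C s) (C \<rho> - C s) > 0"
        by (rule sgnD'[OF g1 g2 g3 m(1)])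
      thus ?thesis using e1 A B by linarith
    qed
    show "cross2 (C a - x) (C b - x) = 0" by (rule I5[OF x])
    show "cross2 (C s - x) (C t - x) = 0" by (rule I6[OF xm])
    show "cross2 (C' c) (- ((C \<rho> - x) + (C c - x))) > 0"
      if "a < \<rho>" "\<rho> < s" "b < c" "c < t" "cross2 (C \<rho> - x) (C c - x) = 0" for \<rho> c
    proof -
      have rI: "\<rho> \<in> I" using memI'[OF ab(1) st(1) that(1,2)] .
      have cI: "c \<in> I" using memI'[OF ab(2) st(2) that(3,4)] .
      have h1: "cross2 (C' c) (C b - C c) \<ge> 0" using left ab cI unfolding left_oriented_def by auto
      have h2: "cross2 (C' c) (C \<rho> - C a) < 0" using L3'[OF cI ab(1) rI] that ord by auto
      have eq: "- ((C \<rho> - x) + (C c - x)) = (C b - C c) - (C \<rho> - C a)"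
        using I9[OF x] by (simp add: algebra_simps)
      show ?thesis unfolding eq by (rule G1[OF h1 h2])
    qed
  qed
  moreover have "chord_area C C' a b = (1/2) * (Phi x a b - Phi x a a)"
    by (rule chord_area_Phi) (use ab ord I7[OF x] in auto)
  moreover have "chord_area C C' s t = (1/2) * (Phi x a t - Phi x a s)"
    by (rule chord_area_Phi) (use ab st ord I8[OF xm] in auto)
  ultimately show ?thesis by simp
qed


lemma case2:
  assumes ab: "a \<in> I" "b \<in> I" and st: "s \<in> I" "t \<in> I"
    and ord: "s < a" "a < t" "t < b"
    and x: "x = (1/2) *\<^sub>R (C a + C b)" and xm: "x = (1 - m) *\<^sub>R C s + m *\<^sub>R C t" and m: "0 < m" "m < 1"
  shows "chord_area C C' a b < chord_area C C' s t"
proof -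
  define e where "e = (C t - x) - (C b - x)"
  have m1: "1 - m > 0" using m by simp
  have "Phi x s b - Phi x s t < Phi x s a - Phi x s s"
  proof (rule arc[where e=e])
    show "s \<in> I" "b \<in> I" "t \<in> I" "b \<in> I" "s \<in> I" "a \<in> I" by fact+
    show "s \<le> t" "s \<le> s" "b \<le> b" "a \<le> b" "t < b" "s < a" using ord by auto
    show "cross2 (C \<rho> - x) (C' \<rho>) > 0" if "\<rho> \<in> I" for \<rho> using phi_pos[OF ab _ that] ord x by auto
    show "cross2 (C \<rho> - x) e < 0" if "\<rho> \<in> {t..b}" for \<rho>
    proof -
      have rI: "\<rho> \<in> I" using that memI[OF st(2) ab(2)] by auto
      have e1: "cross2 (C \<rho> - x) e = - (cross2 (C t - x) (C \<rho> - x) + cross2 (C \<rho> - x) (C b - x))"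
        unfolding e_def by (rule E1)
      have A: "cross2 (C t - x) (C \<rho> - x) = (1 - m) * cross2 (C t - C s) (C \<rho> - C s)" by (rule I4[OF xm])
      have B: "cross2 (C \<rho> - x) (C b - x) = -(1/2) * cross2 (C b - C a) (C \<rho> - C a)" by (rule I2'[OF x])
      have g1: "cross2 (C b - C a) (C \<rho> - C a) \<le> 0" using g_le[OF ab rI] ord that by auto
      have g2: "cross2 (C t - C s) (C \<rho> - C s) \<ge> 0" using g_ge[OF st rI] ord that by auto
      have g3: "cross2 (C b - C a) (C \<rho> - C a) < 0 \<or> cross2 (C t - C s) (C \<rho> - C s) > 0"
      proof (cases "\<rho> = b")
        case True thus ?thesis using sgn_right[OF st ab(2)] ord by auto
      next
        case False thus ?thesis using sgn_in[OF ab, of \<rho>] ord that by auto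
      qed
      have "(1/2) * cross2 (C b - C a) (C \<rho> - C a) - (1 - m) * cross2 (C t - C s) (C \<rho> - C s) < 0"
        by (rule sgnD[OF g1 g2 g3 m1])
      thus ?thesis using e1 A B by linarith
    qed
    show "cross2 (C \<rho> - x) e > 0" if "\<rho> \<in> {s..a}" for \<rho>
    proof -
      have rI: "\<rho> \<in> I" using that memI[OF st(1) ab(1)] by auto
      have e1: "cross2 (C \<rho> - x) e = - (cross2 (C t - x) (C \<rho> - x) + cross2 (C \<rho> - x) (C b - x))"
        unfolding e_def by (rule E1)
      have A: "cross2 (C t - x) (C \<rho> - x) = (1 - m) * cross2 (C t - C s) (C \<rho> - C s)" by (rule I4[OF xm])
      have B: "cross2 (C \<rho> - x) (C b - x) = -(1/2) * cross2 (C b - C a) (C \<rho> - C a)" by (rule I2'[OF x])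
      have g1: "cross2 (C b - C a) (C \<rho> - C a) \<ge> 0" using g_ge[OF ab rI] ord that by auto
      have g2: "cross2 (C t - C s) (C \<rho> - C s) \<le> 0" using g_le[OF st rI] ord that by auto
      have g3: "cross2 (C b - C a) (C \<rho> - C a) > 0 \<or> cross2 (C t - C s) (C \<rho> - C s) < 0"
      proof (cases "\<rho> = a")
        case True thus ?thesis using sgn_in[OF st, of a] ord by auto
      next
        case False thus ?thesis using sgn_left[OF ab rI] ord that by auto
      qed
      have "(1/2) * cross2 (C b - C a) (C \<rho> - C a) - (1 - m) * cross2 (C t - C s) (C \<rho> - C s) > 0"
        by (rule sgnD'[OF g1 g2 g3 m1])
      thus ?thesis using e1 A B by linarith
    qed
    show "cross2 (C t - x) (C s - x) = 0" by (rule I6'[OF xm])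
    show "cross2 (C b - x) (C a - x) = 0" by (rule I5'[OF x])
    show "cross2 (C' c) (- ((C \<rho> - x) + (C c - x))) > 0"
      if "t < \<rho>" "\<rho> < b" "s < c" "c < a" "cross2 (C \<rho> - x) (C c - x) = 0" for \<rho> c
    proof -
      have rI: "\<rho> \<in> I" using memI'[OF st(2) ab(2) that(1,2)] .
      have cI: "c \<in> I" using memI'[OF st(1) ab(1) that(3,4)] .
      have h1: "cross2 (C' c) (C a - C c) \<ge> 0" using left ab cI unfolding left_oriented_def by auto
      have h2: "cross2 (C' c) (C b - C \<rho>) > 0" using L3[OF cI rI ab(2)] that ord by auto
      have eq: "- ((C \<rho> - x) + (C c - x)) = (C a - C c) + (C b - C \<rho>)"
        using I9[OF x] by (simp add: algebra_simps)
      show ?thesis unfolding eq by (rule G2[OF h1 h2])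
    qed
  qed
  moreover have "chord_area C C' a b = (1/2) * (Phi x s b - Phi x s a)"
    by (rule chord_area_Phi) (use ab st ord I7[OF x] in auto)
  moreover have "chord_area C C' s t = (1/2) * (Phi x s t - Phi x s s)"
    by (rule chord_area_Phi) (use ab st ord I8[OF xm] in auto)
  ultimately show ?thesis by simp
qed

lemma CaCb: "a \<in> I \<Longrightarrow> b \<in> I \<Longrightarrow> a \<noteq> b \<Longrightarrow> C a \<noteq> C b"
  using L2[of a b] by (auto simp: cross2_simps)

lemma core:
  assumes ab: "a \<in> I" "b \<in> I" "a < b" and x: "x = (1/2) *\<^sub>R (C a + C b)"
    and ch: "chord_through I C x s t" and ne: "(s, t) \<noteq> (a, b)"
  shows "chord_area C C' a b < chord_area C C' s t"
proof -
  have st: "s \<in> I" "t \<in> I" "s < t" and seg: "x \<in> closed_segment (C s) (C t)"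
    using ch unfolding chord_through_def by auto
  obtain m where m: "0 \<le> m" "m \<le> 1" and xm: "x = (1 - m) *\<^sub>R C s + m *\<^sub>R C t"
    using seg unfolding closed_segment_def by auto
  define g where "g r = cross2 (C b - C a) (C r - C a)" for r
  have gx: "cross2 (C b - C a) (x - C a) = 0"
    using I7[OF x] by (simp add: cross2_swap[of "x - C a"])
  have noton: "x \<noteq> C r" if "r \<in> I" for r
  proof
    assume xr: "x = C r"
    hence "g r = 0" using gx g_def by simp
    hence "r = a \<or> r = b" using online[OF ab(1,2,3) that] g_def by simp
    thus False using xr x I12 CaCb ab by (metis order_less_irrefl)
  qed
  have m0: "m \<noteq> 0" using noton[OF st(1)] xm by auto
  have m1: "m \<noteq> 1" using noton[OF st(2)] xm by auto
  have "(1 - m) * g s + m * g t = 0" using gx I11[OF xm, of "C b" "C a"] g_def by simp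
  hence W: "(g s = 0 \<and> g t = 0) \<or> (g s < 0 \<and> g t > 0) \<or> (g s > 0 \<and> g t < 0)"
    using wsum m m0 m1 by (metis order_le_less)
  have neg: "a < r \<and> r < b" if "r \<in> I" "g r < 0" for r
    using g_ge[OF ab(1,2) that(1) ab(3)] that(2) g_def by (metis linorder_not_le)
  have pos: "r < a \<or> b < r" if "r \<in> I" "g r > 0" for r
    using g_le[OF ab(1,2) that(1) ab(3)] that(2) g_def by (metis linorder_not_le)
  have zer: "r = a \<or> r = b" if "r \<in> I" "g r = 0" for r
    using online[OF ab(1,2,3) that(1)] that(2) g_def by simp
  have mm: "0 < m" "m < 1" using m m0 m1 by auto
  from W show ?thesis
  proof (elim disjE conjE)
    assume "g s = 0" "g t = 0"
    thus ?thesis using zer[OF st(1)] zer[OF st(2)] st(3) ab(3) ne by auto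
  next
    assume "g s < 0" "g t > 0"
    hence "a < s" "s < b" "b < t" using neg[OF st(1)] pos[OF st(2)] st(3) by auto
    thus ?thesis by (rule case1[OF ab(1,2) st(1,2) _ _ _ x xm mm])
  next
    assume "g s > 0" "g t < 0"
    hence "s < a" "a < t" "t < b" using pos[OF st(1)] neg[OF st(2)] st(3) by auto
    thus ?thesis by (rule case2[OF ab(1,2) st(1,2) _ _ _ x xm mm])
  qed
qed

end

context cv begin

lemma area_dist_eq:
  assumes ab: "a \<in> I" "b \<in> I" "a < b" and x: "x = (1/2) *\<^sub>R (C a + C b)"
  shows "area_distance I C C' x = (1/2) * chord_area C C' a b"
proof -
  let ?S = "{chord_area C C' s t | s t. chord_through I C x s t}"
  have ch: "chord_through I C x a b"
    unfolding chord_through_def using ab x midpoint_in_closed_segment[of "C a" "C b"]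
    by (simp add: midpoint_def)
  have "Inf ?S = chord_area C C' a b"
  proof (rule cInf_eq_minimum)
    show "chord_area C C' a b \<in> ?S" using ch by blast
    show "chord_area C C' a b \<le> y" if yS: "y \<in> ?S" for y
    proof -
      obtain s t where y: "y = chord_area C C' s t" "chord_through I C x s t" using yS by blast
      show ?thesis
      proof (cases "(s, t) = (a, b)")
        case True thus ?thesis using y by auto
      next
        case False thus ?thesis using core[OF ab x y(2)] y by auto
      qed
    qed
  qed
  thus ?thesis unfolding area_distance_def by simp
qed

lemma notint_curve:
  assumes cc: "convex_curve I C" and r: "r \<in> I"
  shows "C r \<notin> interior (area_domain I C)"
proof
  assume h: "C r \<in> interior (area_domain I C)"
  have "area_domain I C \<subseteq> convex hull (C ` I)"
  proof
    fix y assume "y \<in> area_domain I C"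
    then obtain a b where y: "y = (1/2) *\<^sub>R (C a + C b)" "a \<in> I" "b \<in> I" unfolding area_domain_def by blast
    have "C a \<in> convex hull (C ` I)" "C b \<in> convex hull (C ` I)" using y hull_subset by fastforce+
    hence "(1/2) *\<^sub>R C a + (1/2) *\<^sub>R C b \<in> convex hull (C ` I)"
      by (intro convexD[OF convex_convex_hull]) auto
    thus "y \<in> convex hull (C ` I)" using y by (simp add: scaleR_right_distrib)
  qed
  hence "C r \<in> interior (convex hull (C ` I))" using h interior_mono by blast
  moreover have "C r \<in> frontier (convex hull (C ` I))" using cc r unfolding convex_curve_def by auto
  ultimately show False unfolding frontier_def by auto
qed

lemma mid_of_interior:
  assumes cc: "convex_curve I C" and p: "p \<in> interior (area_domain I C)"
  shows "\<exists>a b. a \<in> I \<and> b \<in> I \<and> a < b \<and> p = (1/2) *\<^sub>R (C a + C b)"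
proof -
  have "p \<in> area_domain I C" using p interior_subset by blast
  then obtain a b where ab: "p = (1/2) *\<^sub>R (C a + C b)" "a \<in> I" "b \<in> I" "a \<le> b"
    unfolding area_domain_def by blast
  have "a \<noteq> b"
  proof
    assume "a = b"
    hence "p = C a" using ab by (simp add: scaleR_2[symmetric] scaleR_right_distrib[symmetric])
    thus False using notint_curve[OF cc ab(2)] p by simp
  qed
  thus ?thesis using ab by force
qed

lemma minimal_is_mid:
  assumes ab: "a \<in> I" "b \<in> I" "a < b" and p: "p = (1/2) *\<^sub>R (C a + C b)"
    and mc: "minimal_chord I C C' p u v"
  shows "u = a \<and> v = b"
proof (rule ccontr)
  assume ne: "\<not> (u = a \<and> v = b)"
  have ch: "chord_through I C p a b"
    unfolding chord_through_def using ab p midpoint_in_closed_segment[of "C a" "C b"]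
    by (simp add: midpoint_def)
  have "chord_area C C' u v \<le> chord_area C C' a b" using mc ch unfolding minimal_chord_def by blast
  moreover have "chord_area C C' a b < chord_area C C' u v"
    using core[OF ab p _ ] mc ne unfolding minimal_chord_def by auto
  ultimately show False by simp
qed


lemma not_min:
  assumes ab: "a \<in> I" "b \<in> I" "a < b" and p: "p = (1/2) *\<^sub>R (C a + C b)"
    and pint: "p \<in> interior (area_domain I C)" and mn: "\<forall>r\<in>I. a \<le> r"
  shows False
proof -
  obtain \<epsilon> where ep: "\<epsilon> > 0" "ball p \<epsilon> \<subseteq> area_domain I C" using pint mem_interior by blast
  define U where "U = C' a"
  define \<delta> where "\<delta> = \<epsilon> / (norm U + 1)"
  have dpos: "\<delta> > 0" using ep unfolding \<delta>_def by (intro divide_pos_pos) (auto intro: add_nonneg_pos)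
  have "norm ((\<delta>/2) *\<^sub>R U) < \<epsilon>"
  proof -
    have "norm ((\<delta>/2) *\<^sub>R U) = (\<delta>/2) * norm U" using dpos by simp
    also have "\<dots> < \<delta> * (norm U + 1)"
    proof -
      have n: "0 \<le> \<delta> * norm U" using dpos by simp
      have "\<delta>/2 * norm U = (1/2) * (\<delta> * norm U)" by simp
      moreover have "\<delta> * (norm U + 1) = \<delta> * norm U + \<delta>" by (simp add: algebra_simps)
      ultimately show ?thesis using n dpos by linarith
    qed
    also have "\<dots> = \<epsilon>" unfolding \<delta>_def
      by (metis add_nonneg_pos norm_ge_zero zero_less_one nonzero_eq_divide_eq order_less_irrefl mult.commute)
    finally show ?thesis .
  qed
  hence "p - (\<delta>/2) *\<^sub>R U \<in> ball p \<epsilon>" by (simp add: dist_norm)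
  hence "p - (\<delta>/2) *\<^sub>R U \<in> area_domain I C" using ep by blast
  then obtain a' b' where y: "p - (\<delta>/2) *\<^sub>R U = (1/2) *\<^sub>R (C a' + C b')" "a' \<in> I" "b' \<in> I" "a' \<le> b'"
    unfolding area_domain_def by blast
  have veq: "C a' - C a = C b - \<delta> *\<^sub>R U - C b'"
    using y(1) unfolding p by (auto simp: prod_eq_iff algebra_simps)
  have aa: "a \<le> a'" using mn y by auto
  have T1: "cross2 (C' b') (C a' - C a) \<le> 0"
  proof (cases "a = a'")
    case True thus ?thesis by (simp add: cross2_simps)
  next
    case False thus ?thesis using L3'[OF y(3) ab(1) y(2)] aa y(4) by auto
  qed
  have l1: "cross2 (C' b') (C b - C b') \<ge> 0" using left y(3) ab(2) unfolding left_oriented_def by auto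
  have l2: "cross2 U (C' b') \<ge> 0"
  proof (cases "a = b'")
    case True thus ?thesis by (simp add: U_def cross2_simps)
  next
    case False thus ?thesis using L1[OF ab(1) y(3)] aa y(4) U_def by auto
  qed
  have strict: "cross2 (C' b') (C b - C b') > 0 \<or> cross2 U (C' b') > 0"
  proof (cases "b' = b")
    case True thus ?thesis using L1[OF ab(1,2,3)] U_def by auto
  next
    case False thus ?thesis using L2[OF y(3) ab(2)] by auto
  qed
  have "cross2 (C' b') (C b - \<delta> *\<^sub>R U - C b') = cross2 (C' b') (C b - C b') + \<delta> * cross2 U (C' b')"
    by (simp add: cross2_def algebra_simps)
  moreover have "\<delta> * cross2 U (C' b') \<ge> 0" using l2 dpos by simp
  moreover have "cross2 U (C' b') > 0 \<Longrightarrow> \<delta> * cross2 U (C' b') > 0" using dpos by simp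
  ultimately have "cross2 (C' b') (C b - \<delta> *\<^sub>R U - C b') > 0" using l1 strict by linarith
  thus False using T1 veq by simp
qed

lemma not_max:
  assumes ab: "a \<in> I" "b \<in> I" "a < b" and p: "p = (1/2) *\<^sub>R (C a + C b)"
    and pint: "p \<in> interior (area_domain I C)" and mx: "\<forall>r\<in>I. r \<le> b"
  shows False
proof -
  obtain \<epsilon> where ep: "\<epsilon> > 0" "ball p \<epsilon> \<subseteq> area_domain I C" using pint mem_interior by blast
  define W where "W = C' b"
  define \<delta> where "\<delta> = \<epsilon> / (norm W + 1)"
  have dpos: "\<delta> > 0" using ep unfolding \<delta>_def by (intro divide_pos_pos) (auto intro: add_nonneg_pos)
  have "norm ((\<delta>/2) *\<^sub>R W) < \<epsilon>"
  proof -
    have "norm ((\<delta>/2) *\<^sub>R W) = (\<delta>/2) * norm W" using dpos by simp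
    also have "\<dots> < \<delta> * (norm W + 1)"
    proof -
      have n: "0 \<le> \<delta> * norm W" using dpos by simp
      have "\<delta>/2 * norm W = (1/2) * (\<delta> * norm W)" by simp
      moreover have "\<delta> * (norm W + 1) = \<delta> * norm W + \<delta>" by (simp add: algebra_simps)
      ultimately show ?thesis using n dpos by linarith
    qed
    also have "\<dots> = \<epsilon>" unfolding \<delta>_def
      by (metis add_nonneg_pos norm_ge_zero zero_less_one nonzero_eq_divide_eq order_less_irrefl mult.commute)
    finally show ?thesis .
  qed
  hence "p + (\<delta>/2) *\<^sub>R W \<in> ball p \<epsilon>" by (simp add: dist_norm)
  hence "p + (\<delta>/2) *\<^sub>R W \<in> area_domain I C" using ep by blast
  then obtain a' b' where y: "p + (\<delta>/2) *\<^sub>R W = (1/2) *\<^sub>R (C a' + C b')" "a' \<in> I" "b' \<in> I" "a' \<le> b'"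
    unfolding area_domain_def by blast
  have veq: "C b' - C b = C a + \<delta> *\<^sub>R W - C a'"
    using y(1) unfolding p by (auto simp: prod_eq_iff algebra_simps)
  have bb: "b' \<le> b" using mx y by auto
  have T1: "cross2 (C' a') (C b' - C b) \<le> 0"
  proof (cases "b' = b")
    case True thus ?thesis by (simp add: cross2_simps)
  next
    case False
    hence "cross2 (C' a') (C b - C b') > 0" using L3[OF y(2) y(3) ab(2)] bb y(4) by auto
    thus ?thesis by (simp add: cross2_simps)
  qed
  have l1: "cross2 (C' a') (C a - C a') \<ge> 0" using left y(2) ab(1) unfolding left_oriented_def by auto
  have l2: "cross2 (C' a') W \<ge> 0"
  proof (cases "a' = b")
    case True thus ?thesis by (simp add: W_def cross2_simps)
  next
    case False thus ?thesis using L1[OF y(2) ab(2)] bb y(4) W_def by auto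
  qed
  have strict: "cross2 (C' a') (C a - C a') > 0 \<or> cross2 (C' a') W > 0"
  proof (cases "a' = a")
    case True thus ?thesis using L1[OF ab(1,2,3)] W_def by auto
  next
    case False thus ?thesis using L2[OF y(2) ab(1)] by auto
  qed
  have "cross2 (C' a') (C a + \<delta> *\<^sub>R W - C a') = cross2 (C' a') (C a - C a') + \<delta> * cross2 (C' a') W"
    by (simp add: cross2_def algebra_simps)
  moreover have "\<delta> * cross2 (C' a') W \<ge> 0" using l2 dpos by simp
  moreover have "cross2 (C' a') W > 0 \<Longrightarrow> \<delta> * cross2 (C' a') W > 0" using dpos by simp
  ultimately have "cross2 (C' a') (C a + \<delta> *\<^sub>R W - C a') > 0" using l1 strict by linarith
  thus False using T1 veq by simp
qed

lemma uv_interior: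
  assumes ab: "a \<in> I" "b \<in> I" "a < b" and p: "p = (1/2) *\<^sub>R (C a + C b)"
    and pint: "p \<in> interior (area_domain I C)"
  shows "a \<in> interior I" "b \<in> interior I"
proof -
  obtain r where r: "r \<in> I" "r < a" using not_min[OF ab p pint] by (meson not_le)
  show "a \<in> interior I" using intI[OF r(1) ab(2) r(2) ab(3)] .
  obtain r' where r': "r' \<in> I" "b < r'" using not_max[OF ab p pint] by (meson not_le)
  show "b \<in> interior I" using intI[OF ab(1) r'(1) ab(3) r'(2)] .
qed

end

definition Mid :: "(real \<Rightarrow> real \<times> real) \<Rightarrow> real \<times> real \<Rightarrow> real \<times> real" where
  "Mid C z = (1/2) *\<^sub>R (C (fst z) + C (snd z))"
definition Linv :: "(real \<Rightarrow> real \<times> real) \<Rightarrow> real \<times> real \<Rightarrow> real \<times> real \<Rightarrow> real \<times> real" where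
  "Linv C' z k = (2 * cross2 k (C' (snd z)) / cross2 (C' (fst z)) (C' (snd z)),
                  2 * cross2 (C' (fst z)) k / cross2 (C' (fst z)) (C' (snd z)))"
definition Mp :: "(real \<Rightarrow> real \<times> real) \<Rightarrow> real \<times> real \<Rightarrow> real \<times> real \<Rightarrow> real \<times> real" where
  "Mp C' z k = (1/2) *\<^sub>R (fst k *\<^sub>R C' (fst z) + snd k *\<^sub>R C' (snd z))"

lemma Linv_Mp: "cross2 (C' (fst z)) (C' (snd z)) \<noteq> 0 \<Longrightarrow> Linv C' z (Mp C' z k) = k"
  by (simp add: Linv_def Mp_def cross2_def prod_eq_iff field_simps)

lemma bl_Linv: "bounded_linear (Linv C' z)"
  unfolding Linv_def
  by (intro bounded_linear_Pair bounded_linear_divide bounded_linear_mult_right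
      bounded_bilinear.bounded_linear_left[OF bb_cross2] bounded_bilinear.bounded_linear_right[OF bb_cross2]
      bounded_linear_compose[OF bounded_linear_divide] bounded_linear_compose[OF bounded_linear_mult_right])

context cv begin

lemma C_has_der: "s \<in> interior I \<Longrightarrow> (C has_derivative (\<lambda>k. k *\<^sub>R C' s)) (at s)"
  using derC_at unfolding has_vector_derivative_def by blast

lemma Mid_der:
  assumes "fst z \<in> interior I" "snd z \<in> interior I"
  shows "(Mid C has_derivative Mp C' z) (at z)"
proof -
  have d1: "((\<lambda>z. C (fst z)) has_derivative (\<lambda>k. fst k *\<^sub>R C' (fst z))) (at z)"
    using has_derivative_compose[OF has_derivative_fst[OF has_derivative_ident] C_has_der[OF assms(1)]] by simp
  have d2: "((\<lambda>z. C (snd z)) has_derivative (\<lambda>k. snd k *\<^sub>R C' (snd z))) (at z)"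
    using has_derivative_compose[OF has_derivative_snd[OF has_derivative_ident] C_has_der[OF assms(2)]] by simp
  show ?thesis unfolding Mid_def[abs_def] Mp_def[abs_def]
    by (intro has_derivative_scaleR_right has_derivative_add d1 d2)
qed


definition U0 where "U0 k0 = ((interior I \<inter> {k0<..}) \<times> interior I) \<inter> {z. fst z < snd z}"

lemma U0_open: "open (U0 k0)"
  unfolding U0_def
  by (intro open_Int open_Times open_interior open_greaterThan open_Collect_less continuous_intros)

lemma U0_c: "z \<in> U0 k0 \<Longrightarrow> cross2 (C' (fst z)) (C' (snd z)) > 0"
proof -
  assume z: "z \<in> U0 k0"
  have h: "fst z \<in> interior I" "snd z \<in> interior I" "fst z < snd z" using z unfolding U0_def by auto
  have "fst z \<in> I" "snd z \<in> I" using h(1,2) interior_subset by blast+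
  thus ?thesis using L1 h(3) by blast
qed

lemma local_inv:
  assumes uI: "u \<in> interior I" and vI: "v \<in> interior I" and uv: "u < v" and k0: "k0 < u"
  obtains V h where "open V" "Mid C (u, v) \<in> V" "h (Mid C (u, v)) = (u, v)"
    "\<And>y. y \<in> V \<Longrightarrow> h y \<in> U0 k0 \<and> Mid C (h y) = y"
    "\<And>y. y \<in> V \<Longrightarrow> (h has_derivative Linv C' (h y)) (at y)"
proof -
  define fp where "fp z = (blinfun_scaleR_left ((1/2) *\<^sub>R C' (fst z)) o\<^sub>L fst_blinfun)
                        + (blinfun_scaleR_left ((1/2) *\<^sub>R C' (snd z)) o\<^sub>L snd_blinfun)" for z
  have fpa: "blinfun_apply (fp z) = Mp C' z" for z
    by (auto simp: fp_def Mp_def fun_eq_iff algebra_simps plus_blinfun.rep_eq blinfun_apply_blinfun_compose)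
  have z0: "(u, v) \<in> U0 k0" using uI vI uv k0 unfolding U0_def by auto
  have derU: "(Mid C has_derivative blinfun_apply (fp z)) (at z)" if "z \<in> U0 k0" for z
    unfolding fpa by (rule Mid_der) (use that in \<open>auto simp: U0_def\<close>)
  have sub1: "fst ` U0 k0 \<subseteq> I" "snd ` U0 k0 \<subseteq> I" unfolding U0_def using interior_subset by fastforce+
  have c1: "continuous_on (U0 k0) (\<lambda>z. (1/2) *\<^sub>R C' (fst z))"
    by (intro continuous_on_scaleR continuous_on_const continuous_on_compose2[OF contC' continuous_on_fst[OF continuous_on_id] sub1(1)])
  have c2: "continuous_on (U0 k0) (\<lambda>z. (1/2) *\<^sub>R C' (snd z))"
    by (intro continuous_on_scaleR continuous_on_const continuous_on_compose2[OF contC' continuous_on_snd[OF continuous_on_id] sub1(2)])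
  have cfp: "continuous_on (U0 k0) fp"
    unfolding fp_def
    by (intro continuous_on_add
        bounded_bilinear.continuous_on[OF bounded_bilinear_blinfun_compose _ continuous_on_const]
        bounded_linear.continuous_on[OF bounded_linear_blinfun_scaleR_left] c1 c2)
  define invf where "invf = Blinfun (Linv C' (u, v))"
  have invfa: "blinfun_apply invf = Linv C' (u, v)" unfolding invf_def by (rule bounded_linear_Blinfun_apply[OF bl_Linv])
  have cne: "cross2 (C' (fst (u, v))) (C' (snd (u, v))) \<noteq> 0" using U0_c[OF z0] by simp
  have inv: "invf o\<^sub>L fp (u, v) = id_blinfun"
    by (rule blinfun_eqI) (simp add: invfa fpa Linv_Mp[OF cne])
  obtain U' V g g' where U': "open U'" "U' \<subseteq> U0 k0" "(u, v) \<in> U'" "open V" "Mid C (u, v) \<in> V"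
      "homeomorphism U' V (Mid C) g"
      and gd: "\<And>y. y \<in> V \<Longrightarrow> (g has_derivative (g' y)) (at y)"
      and g'd: "\<And>y. y \<in> V \<Longrightarrow> g' y = inv (blinfun_apply (fp (g y)))"
      and bj: "\<And>y. y \<in> V \<Longrightarrow> bij (blinfun_apply (fp (g y)))"
    using inverse_function_theorem[OF U0_open derU cfp z0 inv] by blast
  have hom: "\<And>x. x \<in> U' \<Longrightarrow> g (Mid C x) = x" "\<And>y. y \<in> V \<Longrightarrow> Mid C (g y) = y" "g ` V = U'"
    using U'(6) unfolding homeomorphism_def by auto
  show ?thesis
  proof (rule that[of V g])
    show "open V" "Mid C (u, v) \<in> V" by fact+
    show "g (Mid C (u, v)) = (u, v)" using hom(1) U'(3) .
    show "g y \<in> U0 k0 \<and> Mid C (g y) = y" if "y \<in> V" for y using hom that U'(2) by auto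
    show "(g has_derivative Linv C' (g y)) (at y)" if y: "y \<in> V" for y
    proof -
      have gy: "g y \<in> U0 k0" using hom y U'(2) by auto
      have cg: "cross2 (C' (fst (g y))) (C' (snd (g y))) \<noteq> 0" using U0_c[OF gy] by simp
      have "g' y = Linv C' (g y)"
      proof
        fix w
        have "surj (blinfun_apply (fp (g y)))" using bj[OF y] bij_is_surj by blast
        hence "Mp C' (g y) (inv (Mp C' (g y)) w) = w" unfolding fpa by (simp add: surj_f_inv_f)
        hence "Linv C' (g y) w = inv (Mp C' (g y)) w" using Linv_Mp[OF cg] by metis
        thus "g' y w = Linv C' (g y) w" using g'd[OF y] fpa by simp
      qed
      thus ?thesis using gd[OF y] by simp
    qed
  qed
qed

end

lemma bl_rot90: "bounded_linear rot90"
  unfolding rot90_def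
  by (intro bounded_linear_Pair bounded_linear_minus bounded_linear_fst bounded_linear_snd bounded_linear_ident)

lemma grad_iden:
  fixes Cs Ct U W k :: "real \<times> real"
  assumes c: "cross2 U W \<noteq> 0"
  shows "(1/4) * ((cross2 Ct W * (2 * cross2 U k / cross2 U W) - cross2 Cs U * (2 * cross2 k W / cross2 U W))
          - (cross2 Cs ((2 * cross2 U k / cross2 U W) *\<^sub>R W) + cross2 ((2 * cross2 k W / cross2 U W) *\<^sub>R U) Ct))
        = rot90 ((1/2) *\<^sub>R (Ct - Cs)) \<bullet> k"
proof -
  define p where "p = 2 * cross2 U k / cross2 U W"
  define q where "q = 2 * cross2 k W / cross2 U W"
  have i1: "cross2 k W * fst U + cross2 U k * fst W = fst k * cross2 U W" by (simp add: cross2_def algebra_simps)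
  have i2: "cross2 k W * snd U + cross2 U k * snd W = snd k * cross2 U W" by (simp add: cross2_def algebra_simps)
  have f1: "q * fst U + p * fst W = 2 * (cross2 k W * fst U + cross2 U k * fst W) / cross2 U W"
    unfolding p_def q_def by (simp add: add_divide_distrib)
  have f2: "q * snd U + p * snd W = 2 * (cross2 k W * snd U + cross2 U k * snd W) / cross2 U W"
    unfolding p_def q_def by (simp add: add_divide_distrib)
  have cr: "q *\<^sub>R U + p *\<^sub>R W = 2 *\<^sub>R k"
    using f1 f2 c unfolding i1 i2 by (simp add: prod_eq_iff)
  have "(1/4) * ((cross2 Ct W * p - cross2 Cs U * q) - (cross2 Cs (p *\<^sub>R W) + cross2 (q *\<^sub>R U) Ct))
      = (1/4) * cross2 (Ct - Cs) (q *\<^sub>R U + p *\<^sub>R W)"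
    by (simp add: cross2_def algebra_simps)
  also have "\<dots> = rot90 ((1/2) *\<^sub>R (Ct - Cs)) \<bullet> k" unfolding cr
    by (simp add: cross2_def rot90_def inner_prod_def algebra_simps)
  finally show ?thesis unfolding p_def q_def .
qed

lemma hess_alg:
  fixes U W :: "real \<times> real"
  assumes c: "cross2 U W \<noteq> 0"
    and H: "H = (\<lambda>k. rot90 ((1/2) *\<^sub>R ((2 * cross2 U k / cross2 U W) *\<^sub>R W - (2 * cross2 k W / cross2 U W) *\<^sub>R U)))"
  shows "H U \<bullet> U = 0" "H W \<bullet> W = 0" "H U \<bullet> W = cross2 W U" "hess_det H = -1"
proof -
  have HU: "H U = rot90 (- U)" using c unfolding H by (simp add: cross2_simps)
  have HW: "H W = rot90 W" using c unfolding H by (simp add: cross2_simps)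
  show "H U \<bullet> U = 0" unfolding HU by (simp add: rot90_def inner_prod_def)
  show "H W \<bullet> W = 0" unfolding HW by (simp add: rot90_def inner_prod_def)
  show "H U \<bullet> W = cross2 W U" unfolding HU by (simp add: rot90_def inner_prod_def cross2_def)
  obtain a1 a2 where Ue: "U = (a1, a2)" by fastforce
  obtain b1 b2 where We: "W = (b1, b2)" by fastforce
  define d where "d = a1 * b2 - a2 * b1"
  have d: "d \<noteq> 0" using c by (simp add: Ue We cross2_def d_def)
  have H10: "H (1,0) = ((a2 * b2 + b2 * a2) / d, (- a2 * b1 - b2 * a1) / d)"
    unfolding H Ue We using d by (simp add: cross2_def rot90_def d_def[symmetric] field_simps)
  have H01: "H (0,1) = ((- a1 * b2 - b1 * a2) / d, (a1 * b1 + b1 * a1) / d)"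
    unfolding H Ue We using d by (simp add: cross2_def rot90_def d_def[symmetric] field_simps)
  have "hess_det H = ((a2 * b2 + b2 * a2) / d) * ((a1 * b1 + b1 * a1) / d) - ((- a2 * b1 - b2 * a1) / d) * ((- a1 * b2 - b1 * a2) / d)"
    unfolding hess_det_def H10 H01 by (simp add: inner_prod_def)
  also have "\<dots> = ((a2 * b2 + b2 * a2) * (a1 * b1 + b1 * a1) - (- a2 * b1 - b2 * a1) * (- a1 * b2 - b1 * a2)) / (d * d)"
    using d by (simp add: field_simps)
  also have "(a2 * b2 + b2 * a2) * (a1 * b1 + b1 * a1) - (- a2 * b1 - b2 * a1) * (- a1 * b2 - b1 * a2) = - (d * d)"
    unfolding d_def by algebra
  also have "- (d * d) / (d * d) = -1" using d by simp
  finally show "hess_det H = -1" .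
qed

context cv begin

definition J where "J k0 r = integral {k0..r} kap"

lemma J_der: assumes "k0 \<in> I" "r \<in> interior I" "k0 < r"
  shows "(J k0 has_real_derivative kap r) (at r)"
proof -
  obtain e where e: "e > 0" "ball r e \<subseteq> interior I" using assms(2) open_interior open_contains_ball by blast
  define hi where "hi = r + e/2"
  have "hi \<in> ball r e" using e unfolding hi_def by (simp add: dist_real_def)
  hence hiI: "hi \<in> I" using e(2) interior_subset by blast
  have sub: "{k0..hi} \<subseteq> I" using subI[OF assms(1) hiI] .
  have int: "r \<in> interior {k0..hi}" using assms e unfolding hi_def by auto
  have "((\<lambda>x. integral {k0..x} kap) has_real_derivative kap r) (at r within {k0..hi})"
    by (rule integral_has_real_derivative) (use continuous_on_subset[OF kap_cont sub] assms int in auto)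
  thus ?thesis using at_within_interior[OF int] unfolding J_def[abs_def] by simp
qed

lemma chord_area_J: assumes "k0 \<in> I" "t \<in> I" "k0 \<le> s" "s \<le> t"
  shows "chord_area C C' s t = (1/2) * (J k0 t - J k0 s - cross2 (C s) (C t))"
proof -
  have sI: "s \<in> I" using memI[OF assms(1,2)] assms by auto
  have "integral {k0..s} kap + integral {s..t} kap = integral {k0..t} kap"
    using Henstock_Kurzweil_Integration.integral_combine[where a=k0 and c=s and b=t and f=kap] assms kap_int[of k0 t] by linarith
  thus ?thesis using chord_area_eq[OF sI assms(2,4)] unfolding J_def by simp
qed


definition F where "F k0 z = (1/4) * ((J k0 (snd z) - J k0 (fst z)) - cross2 (C (fst z)) (C (snd z)))"
definition Fp where "Fp z k = (1/4) * ((kap (snd z) * snd k - kap (fst z) * fst k)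
     - (cross2 (C (fst z)) (snd k *\<^sub>R C' (snd z)) + cross2 (fst k *\<^sub>R C' (fst z)) (C (snd z))))"

lemma F_der: assumes k0: "k0 \<in> I" and z: "z \<in> U0 k0"
  shows "(F k0 has_derivative Fp z) (at z)"
proof -
  have zi: "fst z \<in> interior I" "snd z \<in> interior I" "k0 < fst z" "fst z < snd z" using z unfolding U0_def by auto
  have DJ1: "(J k0 has_derivative (\<lambda>x. kap (fst z) * x)) (at (fst z))"
    using J_der[OF k0 zi(1,3)] unfolding has_field_derivative_def by simp
  have DJ2: "(J k0 has_derivative (\<lambda>x. kap (snd z) * x)) (at (snd z))"
    using J_der[OF k0 zi(2)] zi unfolding has_field_derivative_def by simp
  have dJ1: "((\<lambda>z. J k0 (fst z)) has_derivative (\<lambda>k. kap (fst z) * fst k)) (at z)"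
    using has_derivative_compose[OF has_derivative_fst[OF has_derivative_ident] DJ1] by simp
  have dJ2: "((\<lambda>z. J k0 (snd z)) has_derivative (\<lambda>k. kap (snd z) * snd k)) (at z)"
    using has_derivative_compose[OF has_derivative_snd[OF has_derivative_ident] DJ2] by simp
  have d1: "((\<lambda>z. C (fst z)) has_derivative (\<lambda>k. fst k *\<^sub>R C' (fst z))) (at z)"
    using has_derivative_compose[OF has_derivative_fst[OF has_derivative_ident] C_has_der[OF zi(1)]] by simp
  have d2: "((\<lambda>z. C (snd z)) has_derivative (\<lambda>k. snd k *\<^sub>R C' (snd z))) (at z)"
    using has_derivative_compose[OF has_derivative_snd[OF has_derivative_ident] C_has_der[OF zi(2)]] by simp
  have dX: "((\<lambda>z. cross2 (C (fst z)) (C (snd z))) has_derivative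
      (\<lambda>k. cross2 (C (fst z)) (snd k *\<^sub>R C' (snd z)) + cross2 (fst k *\<^sub>R C' (fst z)) (C (snd z)))) (at z)"
    by (rule bounded_bilinear.FDERIV[OF bb_cross2 d1 d2])
  have "((\<lambda>z. (1/4) * ((J k0 (snd z) - J k0 (fst z)) - cross2 (C (fst z)) (C (snd z)))) has_derivative
      (\<lambda>k. (1/4) * ((kap (snd z) * snd k - kap (fst z) * fst k)
     - (cross2 (C (fst z)) (snd k *\<^sub>R C' (snd z)) + cross2 (fst k *\<^sub>R C' (fst z)) (C (snd z)))))) (at z)"
    by (intro has_derivative_mult_right has_derivative_diff dJ1 dJ2 dX)
  thus ?thesis unfolding F_def[abs_def] Fp_def[abs_def] .
qed

lemma Fp_Linv: assumes z: "z \<in> U0 k0"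
  shows "Fp z (Linv C' z k) = rot90 ((1/2) *\<^sub>R (C (snd z) - C (fst z))) \<bullet> k"
proof -
  have c: "cross2 (C' (fst z)) (C' (snd z)) \<noteq> 0" using U0_c[OF z] by simp
  show ?thesis
    unfolding Fp_def Linv_def kap_def fst_conv snd_conv
    using grad_iden[OF c, where Cs="C (fst z)" and Ct="C (snd z)" and k=k] by simp
qed

definition Gr where "Gr z = rot90 ((1/2) *\<^sub>R (C (snd z) - C (fst z)))"
definition Grp where "Grp z k = rot90 ((1/2) *\<^sub>R (snd k *\<^sub>R C' (snd z) - fst k *\<^sub>R C' (fst z)))"

lemma Gr_der: assumes "fst z \<in> interior I" "snd z \<in> interior I"
  shows "(Gr has_derivative Grp z) (at z)"
proof -
  have d1: "((\<lambda>z. C (fst z)) has_derivative (\<lambda>k. fst k *\<^sub>R C' (fst z))) (at z)"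
    using has_derivative_compose[OF has_derivative_fst[OF has_derivative_ident] C_has_der[OF assms(1)]] by simp
  have d2: "((\<lambda>z. C (snd z)) has_derivative (\<lambda>k. snd k *\<^sub>R C' (snd z))) (at z)"
    using has_derivative_compose[OF has_derivative_snd[OF has_derivative_ident] C_has_der[OF assms(2)]] by simp
  show ?thesis unfolding Gr_def[abs_def] Grp_def[abs_def]
    by (intro bounded_linear.has_derivative[OF bl_rot90] has_derivative_scaleR_right has_derivative_diff d1 d2)
qed


lemma main_loc:
  assumes cc: "convex_curve I C" and pint: "p \<in> interior (area_domain I C)"
    and mc: "minimal_chord I C C' p u v"
  shows "\<exists>grad Hf.
           (\<forall>\<^sub>F x in nhds p. (area_distance I C C' has_derivative (\<lambda>h. grad x \<bullet> h)) (at x))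
         \<and> grad p = rot90 ((1/2) *\<^sub>R (C v - C u))
         \<and> (grad has_derivative Hf) (at p)
         \<and> Hf (C' u) \<bullet> C' u = 0
         \<and> Hf (C' v) \<bullet> C' v = 0
         \<and> Hf (C' u) \<bullet> C' v = cross2 (C' v) (C' u)
         \<and> hess_det Hf = -1"
proof -
  obtain a b where ab: "a \<in> I" "b \<in> I" "a < b" "p = (1/2) *\<^sub>R (C a + C b)"
    using mid_of_interior[OF cc pint] by blast
  have "u = a \<and> v = b" using minimal_is_mid[OF ab mc] .
  hence uv: "u \<in> I" "v \<in> I" "u < v" and p: "p = (1/2) *\<^sub>R (C u + C v)" using ab by auto
  have ui: "u \<in> interior I" and vi: "v \<in> interior I" using uv_interior[OF uv p pint] by auto
  obtain k0 where k0: "k0 \<in> I" "k0 < u" using not_min[OF uv p pint] by (meson not_le)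
  have pM: "p = Mid C (u, v)" using p by (simp add: Mid_def)
  obtain V h where V: "open V" "Mid C (u, v) \<in> V" "h (Mid C (u, v)) = (u, v)"
    and hV: "\<And>y. y \<in> V \<Longrightarrow> h y \<in> U0 k0 \<and> Mid C (h y) = y"
    and hd: "\<And>y. y \<in> V \<Longrightarrow> (h has_derivative Linv C' (h y)) (at y)"
    using local_inv[OF ui vi uv(3) k0(2)] by blast
  have pV: "p \<in> V" and hp: "h p = (u, v)" using V pM by auto
  define grad where "grad y = Gr (h y)" for y
  have fF: "area_distance I C C' y = F k0 (h y)" if y: "y \<in> V" for y
  proof -
    have z: "h y \<in> U0 k0" "Mid C (h y) = y" using hV[OF y] by auto
    have zi: "fst (h y) \<in> interior I" "snd (h y) \<in> interior I" "k0 < fst (h y)" "fst (h y) < snd (h y)"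
      using z(1) unfolding U0_def by auto
    have zI: "fst (h y) \<in> I" "snd (h y) \<in> I" using zi(1,2) interior_subset by blast+
    have ye: "y = (1/2) *\<^sub>R (C (fst (h y)) + C (snd (h y)))" using z(2) by (simp add: Mid_def)
    have "area_distance I C C' y = (1/2) * chord_area C C' (fst (h y)) (snd (h y))"
      by (rule area_dist_eq[OF zI zi(4) ye])
    also have "\<dots> = F k0 (h y)"
      using chord_area_J[OF k0(1) zI(2), of "fst (h y)"] zi unfolding F_def by simp
    finally show ?thesis .
  qed
  have fder: "(area_distance I C C' has_derivative (\<lambda>k. grad y \<bullet> k)) (at y)" if y: "y \<in> V" for y
  proof -
    have z: "h y \<in> U0 k0" using hV[OF y] by auto
    have "((\<lambda>y. F k0 (h y)) has_derivative (\<lambda>k. Fp (h y) (Linv C' (h y) k))) (at y)"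
      by (rule has_derivative_compose[OF hd[OF y] F_der[OF k0(1) z]])
    hence "((\<lambda>y. F k0 (h y)) has_derivative (\<lambda>k. grad y \<bullet> k)) (at y)"
      unfolding Fp_Linv[OF z] grad_def Gr_def .
    thus ?thesis
      by (rule has_derivative_transform_within_open[OF _ V(1) y]) (use fF in auto)
  qed
  have ev: "\<forall>\<^sub>F x in nhds p. (area_distance I C C' has_derivative (\<lambda>h. grad x \<bullet> h)) (at x)"
    unfolding eventually_nhds using V(1) pV fder by blast
  have gp: "grad p = rot90 ((1/2) *\<^sub>R (C v - C u))" unfolding grad_def hp Gr_def by simp
  define Hf where "Hf k = Grp (u, v) (Linv C' (u, v) k)" for k
  have gd: "(grad has_derivative Hf) (at p)"
  proof -
    have "(Gr has_derivative Grp (h p)) (at (h p))" unfolding hp by (rule Gr_der) (use ui vi in auto)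
    from has_derivative_compose[OF hd[OF pV] this]
    show ?thesis unfolding grad_def[abs_def] Hf_def[abs_def] hp .
  qed
  have c: "cross2 (C' u) (C' v) \<noteq> 0" using L1[OF uv] by simp
  have Hfe: "Hf = (\<lambda>k. rot90 ((1/2) *\<^sub>R ((2 * cross2 (C' u) k / cross2 (C' u) (C' v)) *\<^sub>R C' v
                  - (2 * cross2 k (C' v) / cross2 (C' u) (C' v)) *\<^sub>R C' u)))"
    by (simp add: Hf_def Grp_def Linv_def fun_eq_iff)
  note HA = hess_alg[OF c Hfe]
  show ?thesis
    apply (rule exI[of _ grad], rule exI[of _ Hf])
    using ev gp gd HA by blast
qed

end

theorem mainTheorem2:
  fixes I :: "real set" and C C' :: "real \<Rightarrow> real \<times> real"
    and p :: "real \<times> real" and u v :: real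
  assumes "is_interval I"
    and "smooth_curve I C C'"
    and "regular_curve I C'"
    and "convex_curve I C"
    and "left_oriented I C C'"
    and "no_parallel_tangents I C'"
    and "p \<in> interior (area_domain I C)"
    and "minimal_chord I C C' p u v"
  shows "\<exists>grad Hf.
           (\<forall>\<^sub>F x in nhds p. (area_distance I C C' has_derivative (\<lambda>h. grad x \<bullet> h)) (at x))
         \<and> grad p = rot90 ((1/2) *\<^sub>R (C v - C u))
         \<and> (grad has_derivative Hf) (at p)
         \<and> Hf (C' u) \<bullet> C' u = 0
         \<and> Hf (C' v) \<bullet> C' v = 0
         \<and> Hf (C' u) \<bullet> C' v = cross2 (C' v) (C' u)
         \<and> hess_det Hf = -1"
proof -
  interpret cv I C C' using assms(1,2,3,5,6) by unfold_locales
  show ?thesis by (rule main_loc[OF assms(4,7,8)])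
qed

end
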